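(* Let $F$ be a maximal flan in a $3$-connected matroid $M$ with $|F|\ge 5$ and $F\ne E(M)$. Let $i\in\{1,2,3\}$, let $j$ be an odd integer with $5\le j\le |F|$, and suppose $F$ has a flan ordering $(f_1,f_2,\dots,f_{|F|})$ such that neither $f_i$ nor $f_j$ is contained in a triangle of $M$. Then (i) $M/f_i$, $M/f_j$ and $\mathrm{si}(M/f_i/f_j)$ are $3$-connected; (ii) if $j\ge 7$, then $M/f_i/f_j$ is $3$-connected; and (iii) if $|F|=5$, then $M/f_i/f_j$ is $3$-connected.
   Context: For a $3$-connected matroid $M$, a set $F\subseteq E(M)$ with $t=|F|\ge 4$ is a flan if it has an ordering $(f_1,\dots,f_t)$ (a flan ordering) such that (a) for each odd $i\in\{1,\dots,t-2\}$, $\{f_i,f_{i+1},f_{i+2}\}$ is a triad; and (b) for each even $i\in\{4,\dots,t\}$, $f_i\in\mathrm{cl}(\{f_1,\dots,f_{i-1}\})$. A flan is maximal if it is not properly contained in another flan. $\mathrm{si}(\cdot)$ denotes simplification. *)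

theory Defs
  imports Main
begin

type_synonym 'a matroid = "'a set \<times> ('a set \<Rightarrow> nat)"

definition gnd :: "'a matroid \<Rightarrow> 'a set" where "gnd M = fst M"
definition rk :: "'a matroid \<Rightarrow> 'a set \<Rightarrow> nat" where "rk M = snd M"

definition matroid :: "'a matroid \<Rightarrow> bool" where
  "matroid M \<longleftrightarrow> finite (gnd M) \<and>
     (\<forall>X. X \<subseteq> gnd M \<longrightarrow> rk M X \<le> card X) \<and>
     (\<forall>X Y. X \<subseteq> Y \<and> Y \<subseteq> gnd M \<longrightarrow> rk M X \<le> rk M Y) \<and>
     (\<forall>X Y. X \<subseteq> gnd M \<and> Y \<subseteq> gnd M \<longrightarrow>
        rk M (X \<union> Y) + rk M (X \<inter> Y) \<le> rk M X + rk M Y)"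

definition contract :: "'a matroid \<Rightarrow> 'a \<Rightarrow> 'a matroid" where
  "contract M e = (gnd M - {e}, \<lambda>X. rk M (X \<union> {e}) - rk M {e})"

definition restrict :: "'a matroid \<Rightarrow> 'a set \<Rightarrow> 'a matroid" where
  "restrict M S = (S, rk M)"

definition loop :: "'a matroid \<Rightarrow> 'a \<Rightarrow> bool" where
  "loop M e \<longleftrightarrow> e \<in> gnd M \<and> rk M {e} = 0"

definition parallel :: "'a matroid \<Rightarrow> 'a \<Rightarrow> 'a \<Rightarrow> bool" where
  "parallel M e f \<longleftrightarrow> e \<in> gnd M \<and> f \<in> gnd M \<and> \<not> loop M e \<and> \<not> loop M f
      \<and> rk M {e, f} = 1"

text \<open>Simplification: keep exactly one element of each parallel class of non-loops
  (well defined up to isomorphism; a fixed choice is taken).\<close>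
definition si :: "'a matroid \<Rightarrow> 'a matroid" where
  "si M = restrict M (SOME S. S \<subseteq> {e \<in> gnd M. \<not> loop M e} \<and>
      (\<forall>e \<in> gnd M. \<not> loop M e \<longrightarrow> (\<exists>!s \<in> S. parallel M e s)))"

definition conn :: "'a matroid \<Rightarrow> 'a set \<Rightarrow> nat" where
  "conn M X = rk M X + rk M (gnd M - X) - rk M (gnd M)"

definition separation :: "'a matroid \<Rightarrow> nat \<Rightarrow> 'a set \<Rightarrow> bool" where
  "separation M k X \<longleftrightarrow> X \<subseteq> gnd M \<and> card X \<ge> k \<and> card (gnd M - X) \<ge> k \<and> conn M X < k"

definition three_connected :: "'a matroid \<Rightarrow> bool" where
  "three_connected M \<longleftrightarrow> (\<forall>k X. k < 3 \<longrightarrow> \<not> separation M k X)"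

definition dependent :: "'a matroid \<Rightarrow> 'a set \<Rightarrow> bool" where
  "dependent M X \<longleftrightarrow> X \<subseteq> gnd M \<and> rk M X < card X"

definition circuit :: "'a matroid \<Rightarrow> 'a set \<Rightarrow> bool" where
  "circuit M C \<longleftrightarrow> dependent M C \<and> (\<forall>D. D \<subset> C \<longrightarrow> \<not> dependent M D)"

definition cocircuit :: "'a matroid \<Rightarrow> 'a set \<Rightarrow> bool" where
  "cocircuit M C \<longleftrightarrow> C \<subseteq> gnd M \<and> C \<noteq> {} \<and> rk M (gnd M - C) < rk M (gnd M) \<and>
     (\<forall>D. D \<subset> C \<and> D \<noteq> {} \<longrightarrow> rk M (gnd M - D) = rk M (gnd M))"

definition triangle :: "'a matroid \<Rightarrow> 'a set \<Rightarrow> bool" where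
  "triangle M T \<longleftrightarrow> circuit M T \<and> card T = 3"

definition triad :: "'a matroid \<Rightarrow> 'a set \<Rightarrow> bool" where
  "triad M T \<longleftrightarrow> cocircuit M T \<and> card T = 3"

definition cl :: "'a matroid \<Rightarrow> 'a set \<Rightarrow> 'a set" where
  "cl M X = {e \<in> gnd M. rk M (X \<union> {e}) = rk M X}"

text \<open>Flan ordering (f_1,...,f_t) is the list fs, with f_k = fs ! (k - 1).\<close>
definition flan_ordering :: "'a matroid \<Rightarrow> 'a set \<Rightarrow> 'a list \<Rightarrow> bool" where
  "flan_ordering M F fs \<longleftrightarrow> distinct fs \<and> set fs = F \<and> F \<subseteq> gnd M \<and> length fs \<ge> 4 \<and>
     (\<forall>k. odd k \<and> 1 \<le> k \<and> k \<le> length fs - 2 \<longrightarrow>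
         triad M {fs ! (k - 1), fs ! k, fs ! (k + 1)}) \<and>
     (\<forall>k. even k \<and> 4 \<le> k \<and> k \<le> length fs \<longrightarrow>
         fs ! (k - 1) \<in> cl M (set (take (k - 1) fs)))"

definition flan :: "'a matroid \<Rightarrow> 'a set \<Rightarrow> bool" where
  "flan M F \<longleftrightarrow> (\<exists>fs. flan_ordering M F fs)"

definition maximal_flan :: "'a matroid \<Rightarrow> 'a set \<Rightarrow> bool" where
  "maximal_flan M F \<longleftrightarrow> flan M F \<and> (\<forall>G. flan M G \<longrightarrow> \<not> F \<subset> G)"

definition in_triangle :: "'a matroid \<Rightarrow> 'a \<Rightarrow> bool" where
  "in_triangle M e \<longleftrightarrow> (\<exists>T. triangle M T \<and> e \<in> T)"

end

theory Submission
  imports Defs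
begin


lemma mat_fin: "matroid M \<Longrightarrow> finite (gnd M)" by (simp add: matroid_def)
lemma mat_card: "matroid M \<Longrightarrow> X \<subseteq> gnd M \<Longrightarrow> rk M X \<le> card X" by (simp add: matroid_def)
lemma mat_mono: "matroid M \<Longrightarrow> X \<subseteq> Y \<Longrightarrow> Y \<subseteq> gnd M \<Longrightarrow> rk M X \<le> rk M Y"
  by (simp add: matroid_def)
lemma mat_sub: "matroid M \<Longrightarrow> X \<subseteq> gnd M \<Longrightarrow> Y \<subseteq> gnd M \<Longrightarrow>
   rk M (X \<union> Y) + rk M (X \<inter> Y) \<le> rk M X + rk M Y"
  by (simp add: matroid_def)
lemma mat_empty: "matroid M \<Longrightarrow> rk M {} = 0"
  using mat_card[of M "{}"] by simp
lemma mat_unit: assumes "matroid M" "X \<subseteq> gnd M" "x \<in> gnd M"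
  shows "rk M (insert x X) \<le> rk M X + 1"
proof -
  have "rk M (X \<union> {x}) + rk M (X \<inter> {x}) \<le> rk M X + rk M {x}"
    using mat_sub[OF assms(1,2), of "{x}"] assms by auto
  moreover have "rk M {x} \<le> 1" using mat_card[OF assms(1), of "{x}"] assms by auto
  ultimately show ?thesis by simp
qed

lemma clmono: assumes "matroid M" "Z \<subseteq> W" "W \<subseteq> gnd M" "x \<in> gnd M"
  "rk M (insert x Z) = rk M Z" shows "rk M (insert x W) = rk M W"
proof -
  have "W \<union> insert x Z = insert x W" using assms by auto
  then have "rk M (insert x W) + rk M (W \<inter> insert x Z) \<le> rk M W + rk M (insert x Z)"
    using mat_sub[OF assms(1) assms(3), of "insert x Z"] assms by auto
  moreover have "rk M Z \<le> rk M (W \<inter> insert x Z)"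
    using mat_mono[OF assms(1), of Z "W \<inter> insert x Z"] assms by auto
  moreover have "rk M W \<le> rk M (insert x W)" using mat_mono[OF assms(1), of W "insert x W"] assms by auto
  ultimately show ?thesis using assms(5) by linarith
qed

lemma cl_union: assumes "matroid M" "X \<subseteq> gnd M" "Z \<subseteq> gnd M"
  "\<forall>z\<in>Z. rk M (insert z X) = rk M X" shows "rk M (X \<union> Z) = rk M X"
proof -
  have "finite Z" using assms mat_fin finite_subset by blast
  then show ?thesis using assms(3,4)
  proof (induction Z rule: finite_induct)
    case empty then show ?case by simp
  next
    case (insert z Z)
    have "rk M (insert z (X \<union> Z)) = rk M (X \<union> Z)"
      using clmono[OF assms(1), of X "X \<union> Z" z] insert assms by auto
    then show ?case using insert by auto
  qed
qed


lemma notcl: assumes "matroid M" "Z \<subseteq> W" "W \<subseteq> gnd M" "x \<in> gnd M"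
  "rk M (insert x W) \<noteq> rk M W" shows "rk M (insert x Z) = rk M Z + 1"
proof -
  have "rk M (insert x Z) \<noteq> rk M Z" using clmono[OF assms(1-4)] assms(5) by blast
  moreover have "rk M Z \<le> rk M (insert x Z)" using mat_mono[OF assms(1), of Z "insert x Z"] assms by auto
  moreover have "rk M (insert x Z) \<le> rk M Z + 1" using mat_unit[OF assms(1), of Z x] assms by auto
  ultimately show ?thesis by linarith
qed

lemma gnd_pair[simp]: "gnd (A, f) = A" by (simp add: gnd_def)
lemma rk_pair[simp]: "rk (A, f) = f" by (simp add: rk_def)

lemma tc_cong: assumes "gnd A = gnd B" "\<forall>X. X \<subseteq> gnd A \<longrightarrow> rk A X = rk B X" "three_connected A"
  shows "three_connected B"
  unfolding three_connected_def
proof (intro allI impI notI)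
  fix k X assume k: "k < (3::nat)" and s: "separation B k X"
  have "conn A X = conn B X" using s assms(1,2) unfolding separation_def conn_def
    by (metis Diff_subset order_refl)
  then have "separation A k X" using s assms(1) unfolding separation_def by simp
  then show False using assms(3) k unfolding three_connected_def by blast
qed

locale m3 =
  fixes M :: "'a matroid"
  assumes mat: "matroid M" and tc: "three_connected M" and big: "6 \<le> card (gnd M)"
begin

abbreviation "E \<equiv> gnd M"
abbreviation "r \<equiv> rk M"

lemma finE: "finite E" by (rule mat_fin[OF mat])
lemma mono: "X \<subseteq> Y \<Longrightarrow> Y \<subseteq> E \<Longrightarrow> r X \<le> r Y" by (rule mat_mono[OF mat])
lemma rcard: "X \<subseteq> E \<Longrightarrow> r X \<le> card X" by (rule mat_card[OF mat])
lemma submod: "X \<subseteq> E \<Longrightarrow> Y \<subseteq> E \<Longrightarrow> r (X \<union> Y) + r (X \<inter> Y) \<le> r X + r Y"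
  by (rule mat_sub[OF mat])
lemma unit: "X \<subseteq> E \<Longrightarrow> x \<in> E \<Longrightarrow> r (insert x X) \<le> r X + 1" by (rule mat_unit[OF mat])
lemma rE: "X \<subseteq> E \<Longrightarrow> r X \<le> r E" by (rule mono) auto

lemma T1: assumes "X \<subseteq> E" "X \<noteq> {}" "X \<noteq> E" shows "r E + 1 \<le> r X + r (E - X)"
proof -
  have ns: "\<not> separation M 1 X" using tc unfolding three_connected_def by auto
  have fX: "finite X" using assms(1) finE by (rule finite_subset)
  have c1: "1 \<le> card X" using fX assms(2) by (simp add: Suc_le_eq card_gt_0_iff)
  have "E - X \<noteq> {}" using assms(1,3) by blast
  then have c2: "1 \<le> card (E - X)" using finE by (simp add: Suc_le_eq card_gt_0_iff)
  have "\<not> conn M X < 1" using ns assms(1) c1 c2 unfolding separation_def by blast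
  then show ?thesis unfolding conn_def by linarith
qed

lemma T2: assumes "X \<subseteq> E" "2 \<le> card X" "2 \<le> card (E - X)" shows "r E + 2 \<le> r X + r (E - X)"
proof -
  have "\<not> separation M 2 X" using tc unfolding three_connected_def by auto
  then have "\<not> conn M X < 2" using assms unfolding separation_def by blast
  then show ?thesis unfolding conn_def by linarith
qed

lemma r1: assumes "x \<in> E" shows "r {x} = 1"
proof -
  have "{x} \<noteq> E"
  proof
    assume h: "{x} = E"
    have "card E = 1" by (simp add: h[symmetric])
    then show False using big by simp
  qed
  then have "r E + 1 \<le> r {x} + r (E - {x})" using T1[of "{x}"] assms by auto
  moreover have "r (E - {x}) \<le> r E" using rE by auto
  moreover have "r {x} \<le> 1" using rcard[of "{x}"] assms by auto
  ultimately show ?thesis by linarith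
qed

lemma rco1: assumes "x \<in> E" shows "r (E - {x}) = r E"
proof -
  have "{x} \<noteq> E"
  proof
    assume h: "{x} = E"
    have "card E = 1" by (simp add: h[symmetric])
    then show False using big by simp
  qed
  then have "r E + 1 \<le> r {x} + r (E - {x})" using T1[of "{x}"] assms by auto
  moreover have "r (E - {x}) \<le> r E" using rE by auto
  ultimately show ?thesis using r1[OF assms] by linarith
qed

lemma card_minus2: assumes "x \<in> E" "y \<in> E" "x \<noteq> y" shows "2 \<le> card (E - {x, y})"
proof -
  have "card (E - {x,y}) = card E - 2" using assms finE by (simp add: card_Diff_subset)
  then show ?thesis using big by simp
qed

lemma r2: assumes "x \<in> E" "y \<in> E" "x \<noteq> y" shows "r {x, y} = 2"
proof -
  have "r E + 2 \<le> r {x,y} + r (E - {x,y})" using T2[of "{x,y}"] assms card_minus2 by auto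
  moreover have "r (E - {x,y}) \<le> r E" using rE by auto
  moreover have "r {x,y} \<le> 2" using rcard[of "{x,y}"] assms by (auto simp: card_insert_if)
  ultimately show ?thesis by linarith
qed

lemma rco2: assumes "x \<in> E" "y \<in> E" "x \<noteq> y" shows "r (E - {x, y}) = r E"
proof -
  have "r E + 2 \<le> r {x,y} + r (E - {x,y})" using T2[of "{x,y}"] assms card_minus2 by auto
  moreover have "r (E - {x,y}) \<le> r E" using rE by auto
  ultimately show ?thesis using r2[OF assms] by linarith
qed

lemma small: assumes "D \<subseteq> E" "card D \<le> 2" shows "r D = card D"
proof -
  have fin: "finite D" using assms finE finite_subset by blast
  have "card D = 0 \<or> card D = 1 \<or> card D = 2" using assms by linarith
  then show ?thesis
  proof (elim disjE)
    assume "card D = 0" then have "D = {}" using fin by simp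
    then show ?thesis using mat_empty[OF mat] by simp
  next
    assume "card D = 1" then obtain x where "D = {x}" by (auto simp: card_Suc_eq)
    then show ?thesis using r1 assms by auto
  next
    assume "card D = 2" then obtain x y where "D = {x,y}" "x \<noteq> y" by (meson card_2_iff)
    then show ?thesis using r2 assms by auto
  qed
qed

lemma no_tri: assumes "\<not> in_triangle M e" "x \<in> E" "y \<in> E" "e \<in> E" "x \<noteq> y" "x \<noteq> e" "y \<noteq> e"
  shows "r {x, y, e} = 3"
proof (rule ccontr)
  assume ne: "r {x, y, e} \<noteq> 3"
  have c3: "card {x,y,e} = 3" using assms by auto
  have sub: "{x,y,e} \<subseteq> E" using assms by auto
  have "r {x,y,e} \<le> 3" using rcard[OF sub] c3 by simp
  then have dep: "dependent M {x,y,e}" using ne sub c3 unfolding dependent_def by auto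
  have "\<forall>D. D \<subset> {x,y,e} \<longrightarrow> \<not> dependent M D"
  proof (intro allI impI)
    fix D assume "D \<subset> {x,y,e}"
    then have "card D < 3" "D \<subseteq> E" using c3 psubset_card_mono[of "{x,y,e}" D] sub by auto
    then show "\<not> dependent M D" using small unfolding dependent_def by auto
  qed
  then have "triangle M {x,y,e}" using dep c3 unfolding triangle_def circuit_def by auto
  then show False using assms(1) unfolding in_triangle_def by auto
qed

lemma triadE: assumes "triad M T"
  shows "T \<subseteq> E" "card T = 3" "r (E - T) < r E" "\<And>x. x \<in> T \<Longrightarrow> r (E - (T - {x})) = r E"
proof -
  show "T \<subseteq> E" "card T = 3" "r (E - T) < r E" using assms unfolding triad_def cocircuit_def by auto
  fix x assume x: "x \<in> T"
  have "T - {x} \<subset> T" using x by auto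
  moreover have "T - {x} \<noteq> {}"
  proof
    assume "T - {x} = {}"
    then have "T \<subseteq> {x}" by auto
    then have "card T \<le> 1" using card_mono[of "{x}" T] by auto
    then show False using assms unfolding triad_def by auto
  qed
  ultimately show "r (E - (T - {x})) = r E" using assms unfolding triad_def cocircuit_def by auto
qed

lemma triad_notcl: assumes "triad M T" "x \<in> T" "Z \<subseteq> E - T" shows "r (insert x Z) = r Z + 1"
proof -
  have TE: "T \<subseteq> E" using triadE[OF assms(1)] by auto
  have "insert x (E - T) = E - (T - {x})" using assms TE by auto
  then have "r (insert x (E - T)) \<noteq> r (E - T)" using triadE[OF assms(1)] assms(2) by auto
  then show ?thesis using notcl[OF mat assms(3)] TE assms by auto
qed


definition lamok :: "'a set \<Rightarrow> 'a set \<Rightarrow> bool" where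
  "lamok K X \<longleftrightarrow> r (X \<union> K) + r (E - X) \<le> r E + r K + 1"

definition sep2 :: "'a set \<Rightarrow> 'a set \<Rightarrow> bool" where
  "sep2 K X \<longleftrightarrow> X \<subseteq> E - K \<and> 2 \<le> card X \<and> 2 \<le> card (E - K - X) \<and> lamok K X"

lemma move: assumes "K \<subseteq> E" "X \<subseteq> E - K" "g \<in> E - K - X" "lamok K X"
  "r (insert g (X \<union> K)) = r (X \<union> K) \<or> r (E - insert g X) < r (E - X)"
  shows "lamok K (insert g X)"
proof -
  have s1: "X \<union> K \<subseteq> E" using assms by auto
  have e1: "insert g X \<union> K = insert g (X \<union> K)" by auto
  have m1: "r (E - insert g X) \<le> r (E - X)" by (rule mono) auto
  have u1: "r (insert g (X \<union> K)) \<le> r (X \<union> K) + 1" using unit[OF s1] assms(3) by auto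
  from assms(5) show ?thesis
  proof
    assume "r (insert g (X \<union> K)) = r (X \<union> K)"
    then show ?thesis using assms(4) m1 unfolding lamok_def e1 by linarith
  next
    assume "r (E - insert g X) < r (E - X)"
    then show ?thesis using assms(4) u1 unfolding lamok_def e1 by linarith
  qed
qed

lemma stepC: assumes "G \<subseteq> X" "K \<subseteq> E" "X \<subseteq> E" "g \<in> E" "r (insert g (G \<union> K)) = r (G \<union> K)"
  shows "r (insert g (X \<union> K)) = r (X \<union> K)"
  using clmono[OF mat, of "G \<union> K" "X \<union> K" g] assms by auto

lemma stepD: assumes "G \<subseteq> X" "X \<subseteq> E" "g \<in> E" "g \<notin> X" "r (E - G) \<noteq> r (E - insert g G)"
  shows "r (E - insert g X) < r (E - X)"
proof -
  have gG: "g \<notin> G" using assms by auto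
  have "insert g (E - insert g G) = E - G" using assms gG by auto
  then have "r (insert g (E - insert g G)) \<noteq> r (E - insert g G)" using assms(5) by simp
  then have "r (insert g (E - insert g X)) = r (E - insert g X) + 1"
    using notcl[OF mat, of "E - insert g X" "E - insert g G" g] assms by auto
  moreover have "insert g (E - insert g X) = E - X" using assms by auto
  ultimately show ?thesis by simp
qed

lemma absorb:
  fixes g :: "nat \<Rightarrow> 'a" and m :: nat
  assumes K: "K \<subseteq> E" and X0: "X0 \<subseteq> E - K" "lamok K X0" "2 \<le> card (E - K - X0)"
    and gE: "\<forall>l<m. g l \<in> E - K"
    and st: "\<forall>l<m. g l \<in> X0 \<or> r (insert (g l) (g ` {..<l} \<union> K)) = r (g ` {..<l} \<union> K)
                    \<or> r (E - g ` {..<l}) \<noteq> r (E - insert (g l) (g ` {..<l}))"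
  shows "\<exists>X. X0 \<subseteq> X \<and> X \<subseteq> E - K \<and> lamok K X \<and> 2 \<le> card (E - K - X) \<and>
             (card (E - K - X) = 2 \<or> g ` {..<m} \<subseteq> X)"
proof -
  have "\<forall>l. l \<le> m \<longrightarrow> (\<exists>X. X0 \<subseteq> X \<and> X \<subseteq> E - K \<and> lamok K X \<and> 2 \<le> card (E - K - X) \<and>
             (card (E - K - X) = 2 \<or> g ` {..<l} \<subseteq> X))"
  proof (intro allI)
    fix l show "l \<le> m \<longrightarrow> (\<exists>X. X0 \<subseteq> X \<and> X \<subseteq> E - K \<and> lamok K X \<and> 2 \<le> card (E - K - X) \<and>
             (card (E - K - X) = 2 \<or> g ` {..<l} \<subseteq> X))"
    proof (induction l)
      case 0 then show ?case using X0 by auto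
    next
      case (Suc l)
      show ?case
      proof
        assume lm: "Suc l \<le> m"
        then obtain X where X: "X0 \<subseteq> X" "X \<subseteq> E - K" "lamok K X" "2 \<le> card (E - K - X)"
             "card (E - K - X) = 2 \<or> g ` {..<l} \<subseteq> X" using Suc by auto
        have lless: "l < m" using lm by simp
        have finY: "finite (E - K - X)" using finE by auto
        show "\<exists>X. X0 \<subseteq> X \<and> X \<subseteq> E - K \<and> lamok K X \<and> 2 \<le> card (E - K - X) \<and>
             (card (E - K - X) = 2 \<or> g ` {..<Suc l} \<subseteq> X)"
        proof (cases "card (E - K - X) = 2")
          case True then show ?thesis using X by (intro exI[of _ X]) simp
        next
          case False
          then have GX: "g ` {..<l} \<subseteq> X" and c3: "3 \<le> card (E - K - X)" using X by auto
          show ?thesis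
          proof (cases "g l \<in> X")
            case True
            then have "g ` {..<Suc l} \<subseteq> X" using GX by (auto simp: lessThan_Suc)
            then show ?thesis using X by (intro exI[of _ X]) simp
          next
            case gnX: False
            have gY: "g l \<in> E - K - X" using gE lless gnX by auto
            have XE: "X \<subseteq> E" using X by auto
            have "r (insert (g l) (X \<union> K)) = r (X \<union> K) \<or> r (E - insert (g l) X) < r (E - X)"
            proof -
              have "g l \<notin> X0" using gnX X by auto
              then have "r (insert (g l) (g ` {..<l} \<union> K)) = r (g ` {..<l} \<union> K)
                    \<or> r (E - g ` {..<l}) \<noteq> r (E - insert (g l) (g ` {..<l}))" using st lless by auto
              then show ?thesis
              proof
                assume "r (insert (g l) (g ` {..<l} \<union> K)) = r (g ` {..<l} \<union> K)"
                then show ?thesis using stepC[OF GX K XE] gY by auto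
              next
                assume "r (E - g ` {..<l}) \<noteq> r (E - insert (g l) (g ` {..<l}))"
                then show ?thesis using stepD[OF GX XE] gY by auto
              qed
            qed
            then have lam: "lamok K (insert (g l) X)" using move[OF K X(2) gY X(3)] by blast
            have "E - K - insert (g l) X = (E - K - X) - {g l}" by auto
            then have "card (E - K - insert (g l) X) = card (E - K - X) - 1"
              using gY finY by simp
            then have c2: "2 \<le> card (E - K - insert (g l) X)" using c3 by simp
            have "g ` {..<Suc l} \<subseteq> insert (g l) X" using GX by (auto simp: lessThan_Suc)
            moreover have "X0 \<subseteq> insert (g l) X" "insert (g l) X \<subseteq> E - K" using X gY by auto
            ultimately show ?thesis using lam c2 by (intro exI[of _ "insert (g l) X"]) simp
          qed
        qed
      qed
    qed
  qed
  then show ?thesis by (meson order_refl)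
qed

lemma sep2_sym: assumes "K \<subseteq> E" "sep2 K X" shows "sep2 K (E - K - X)"
proof -
  have X: "X \<subseteq> E - K" using assms unfolding sep2_def by auto
  have e1: "E - K - (E - K - X) = X" using X by auto
  have e2: "(E - K - X) \<union> K = E - X" using X assms(1) by auto
  have e3: "E - (E - K - X) = X \<union> K" using X assms(1) by auto
  show ?thesis using assms unfolding sep2_def lamok_def e1 e2 e3 by auto
qed


lemma conn_cK: assumes "K \<subseteq> E" "X \<subseteq> E - K"
  shows "conn (E - K, \<lambda>X. r (X \<union> K) - r K) X = r (X \<union> K) + r (E - X) - (r E + r K)"
proof -
  have e1: "(E - K - X) \<union> K = E - X" using assms by auto
  have e2: "(E - K) \<union> K = E" using assms by auto
  have a1: "r K \<le> r (X \<union> K)" by (rule mono) (use assms in auto)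
  have a2: "r K \<le> r (E - X)" by (rule mono) (use assms in auto)
  have a3: "r K \<le> r E" by (rule mono) (use assms in auto)
  have a4: "r (X \<union> K) \<le> r E" by (rule mono) (use assms in auto)
  show ?thesis unfolding conn_def gnd_pair rk_pair e1 e2 using a1 a2 a3 a4 by linarith
qed

lemma tc_cK: assumes K: "K \<subseteq> E"
  and H1: "\<forall>X. X \<subseteq> E - K \<longrightarrow> X \<noteq> {} \<longrightarrow> E - K - X \<noteq> {} \<longrightarrow> r E + r K + 1 \<le> r (X \<union> K) + r (E - X)"
  and H2: "\<forall>X. \<not> sep2 K X"
  shows "three_connected (E - K, \<lambda>X. r (X \<union> K) - r K)"
  unfolding three_connected_def
proof (intro allI impI notI)
  fix k X assume k: "k < (3::nat)" and s: "separation (E - K, \<lambda>X. r (X \<union> K) - r K) k X"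
  have X: "X \<subseteq> E - K" and c1: "k \<le> card X" and c2: "k \<le> card (E - K - X)"
    and cn: "conn (E - K, \<lambda>X. r (X \<union> K) - r K) X < k"
    using s unfolding separation_def by auto
  have cc: "r (X \<union> K) + r (E - X) - (r E + r K) < k" using cn conn_cK[OF K X] by simp
  have "k = 0 \<or> k = 1 \<or> k = 2" using k by linarith
  then show False
  proof (elim disjE)
    assume "k = 0" then show False using cc by simp
  next
    assume k1: "k = 1"
    have "card X \<noteq> 0" using c1 k1 by simp
    then have "X \<noteq> {}" by (metis card.empty)
    moreover have "card (E - K - X) \<noteq> 0" using c2 k1 by simp
    then have "E - K - X \<noteq> {}" by (metis card.empty)
    ultimately have "r E + r K + 1 \<le> r (X \<union> K) + r (E - X)" using H1 X by blast
    then show False using cc k1 by linarith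
  next
    assume k2: "k = 2"
    have "lamok K X" using cc k2 unfolding lamok_def by linarith
    then have "sep2 K X" using X c1 c2 k2 unfolding sep2_def by simp
    then show False using H2 by blast
  qed
qed

lemma tc_cK_T2: assumes K: "K \<subseteq> E" and tcK: "three_connected (E - K, \<lambda>X. r (X \<union> K) - r K)"
  and X: "X \<subseteq> E - K" "2 \<le> card X" "2 \<le> card (E - K - X)"
  shows "r E + r K + 2 \<le> r (X \<union> K) + r (E - X)"
proof -
  have "\<not> separation (E - K, \<lambda>X. r (X \<union> K) - r K) 2 X" using tcK unfolding three_connected_def by auto
  then have "\<not> conn (E - K, \<lambda>X. r (X \<union> K) - r K) X < 2" using X unfolding separation_def by auto
  then show ?thesis using conn_cK[OF K X(1)] by linarith
qed

lemma contract_eq: "contract M e = (E - {e}, \<lambda>X. r (X \<union> {e}) - r {e})"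
  by (simp add: contract_def)

lemma contract2_tc: assumes "a \<in> E" "b \<in> E" "a \<noteq> b"
  and "three_connected (E - {a, b}, \<lambda>X. r (X \<union> {a, b}) - r {a, b})"
  shows "three_connected (contract (contract M a) b)"
proof (rule tc_cong[OF _ _ assms(4)])
  show "gnd (E - {a, b}, \<lambda>X. r (X \<union> {a, b}) - r {a, b}) = gnd (contract (contract M a) b)"
    by (auto simp: contract_def)
  show "\<forall>X. X \<subseteq> gnd (E - {a, b}, \<lambda>X. r (X \<union> {a, b}) - r {a, b}) \<longrightarrow>
       rk (E - {a, b}, \<lambda>X. r (X \<union> {a, b}) - r {a, b}) X = rk (contract (contract M a) b) X"
  proof (intro allI impI)
    fix X assume X: "X \<subseteq> gnd (E - {a, b}, \<lambda>X. r (X \<union> {a, b}) - r {a, b})"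
    have e: "X \<union> {b} \<union> {a} = X \<union> {a, b}" "{b} \<union> {a} = {a, b}" by auto
    have "r {a} \<le> r {a,b}" by (rule mono) (use assms in auto)
    moreover have "r {a,b} \<le> r (X \<union> {a,b})" by (rule mono) (use assms X in auto)
    ultimately show "rk (E - {a, b}, \<lambda>X. r (X \<union> {a, b}) - r {a, b}) X = rk (contract (contract M a) b) X"
      unfolding contract_def rk_pair e by simp
  qed
qed

end

locale fl = m3 +
  fixes F :: "'a set" and fs :: "'a list"
  assumes fo: "flan_ordering M F fs" and FE: "F \<noteq> gnd M" and mx: "maximal_flan M F"
begin

abbreviation "t \<equiv> length fs"
definition Fk :: "nat \<Rightarrow> 'a set" where "Fk k = (!) fs ` {..<k}"

lemma dist: "distinct fs" and setfs: "set fs = F" and FsubE: "F \<subseteq> E" and t4: "4 \<le> t"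
  using fo unfolding flan_ordering_def by auto

lemma fE: "k < t \<Longrightarrow> fs ! k \<in> E" using setfs FsubE nth_mem by blast

lemma fne: "k < t \<Longrightarrow> l < t \<Longrightarrow> k \<noteq> l \<Longrightarrow> fs ! k \<noteq> fs ! l"
  using dist nth_eq_iff_index_eq by blast

lemma Fk_take: assumes "k \<le> t" shows "Fk k = set (take k fs)"
proof -
  have "(!) fs ` {0..<k} = set (take k fs)" using nth_image[OF assms] .
  then show ?thesis unfolding Fk_def by (simp only: atLeast0LessThan)
qed

lemma F_eq: "F = Fk t" using Fk_take[of t] setfs by simp

lemma Fk_sub: assumes "k \<le> t" shows "Fk k \<subseteq> E"
proof -
  have "set (take k fs) \<subseteq> set fs" by (rule set_take_subset)
  then show ?thesis using Fk_take[OF assms] setfs FsubE by simp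
qed

lemma Fk_Suc: "Fk (Suc k) = insert (fs ! k) (Fk k)" unfolding Fk_def lessThan_Suc by simp

lemma Fk_mem: assumes "l < t" "k \<le> t" shows "fs ! l \<in> Fk k \<longleftrightarrow> l < k"
proof
  assume "fs ! l \<in> Fk k"
  then obtain i where i: "i < k" "fs ! l = fs ! i" unfolding Fk_def by auto
  show "l < k"
  proof (rule ccontr)
    assume "\<not> l < k"
    then have "l \<noteq> i" "i < t" using i assms by auto
    then show False using fne[OF assms(1)] i by metis
  qed
next
  assume "l < k" then show "fs ! l \<in> Fk k" unfolding Fk_def by simp
qed

lemma card_Fk: assumes "k \<le> t" shows "card (Fk k) = k"
proof -
  have "inj_on ((!) fs) {..<k}" using inj_on_nth[OF dist] assms by auto
  then show ?thesis unfolding Fk_def by (simp add: card_image)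
qed

lemma tri: assumes "even m" "m + 2 < t" shows "triad M {fs ! m, fs ! (m+1), fs ! (m+2)}"
proof -
  have "odd (m+1)" "1 \<le> m + 1" "m + 1 \<le> t - 2" using assms by auto
  then have "triad M {fs ! (m + 1 - 1), fs ! (m+1), fs ! (m + 1 + 1)}"
    using fo unfolding flan_ordering_def by blast
  then show ?thesis by simp
qed

lemma clo: assumes "odd m" "3 \<le> m" "m < t" shows "r (insert (fs ! m) (Fk m)) = r (Fk m)"
proof -
  have "even (m+1)" "4 \<le> m + 1" "m + 1 \<le> t" using assms by auto
  then have "fs ! (m + 1 - 1) \<in> cl M (set (take (m + 1 - 1) fs))"
    using fo unfolding flan_ordering_def by blast
  then have "fs ! m \<in> cl M (Fk m)" using Fk_take[of m] assms by simp
  then show ?thesis unfolding cl_def by simp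
qed

lemma T1tri: "triad M {fs!0, fs!1, fs!2}" using tri[of 0] t4 by (simp add: numeral_2_eq_2)

lemma rT1: "r {fs!0, fs!1, fs!2} \<le> 3"
proof -
  have "fs!0 \<in> E" by (rule fE) (use t4 in linarith)
  moreover have "fs!1 \<in> E" by (rule fE) (use t4 in linarith)
  moreover have "fs!2 \<in> E" by (rule fE) (use t4 in linarith)
  ultimately have "{fs!0, fs!1, fs!2} \<subseteq> E" by simp
  then have "r {fs!0, fs!1, fs!2} \<le> card {fs!0, fs!1, fs!2}" by (rule rcard)
  also have "\<dots> \<le> 3" by (simp add: card_insert_if)
  finally show ?thesis .
qed

lemma F4eq: "Fk 4 = {fs!0, fs!1, fs!2, fs!3}"
proof -
  have "{..<4::nat} = {0,1,2,3}" by (simp add: lessThan_Suc numeral_eq_Suc insert_commute)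
  then show ?thesis unfolding Fk_def by simp
qed

lemma F3eq: "Fk 3 = {fs!0, fs!1, fs!2}"
proof -
  have "{..<3::nat} = {0,1,2}" by (simp add: lessThan_Suc numeral_eq_Suc insert_commute)
  then show ?thesis unfolding Fk_def by simp
qed

lemma rF4: "r (Fk 4) \<le> 3"
proof -
  have "r (insert (fs!3) (Fk 3)) = r (Fk 3)" using clo[of 3] t4 by simp
  moreover have "Fk 4 = insert (fs!3) (Fk 3)" using Fk_Suc[of 3] by (simp add: numeral_nat)
  ultimately show ?thesis using rT1 F3eq by simp
qed


lemma Fk_mono: "k \<le> l \<Longrightarrow> Fk k \<subseteq> Fk l" unfolding Fk_def by auto

lemma lam_Fk: assumes "3 \<le> k" "k \<le> t" shows "r (Fk k) + r (E - Fk k) \<le> r E + 2"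
  using assms
proof (induction k rule: nat_induct_at_least)
  case base
  have "r (E - Fk 3) < r E" using triadE(3)[OF T1tri] F3eq by simp
  then show ?case using rT1 F3eq by simp
next
  case (Suc k)
  have IH: "r (Fk k) + r (E - Fk k) \<le> r E + 2" using Suc by simp
  have kt: "k < t" using Suc by simp
  have eq: "Fk (Suc k) = insert (fs ! k) (Fk k)" by (rule Fk_Suc)
  have FkE: "Fk k \<subseteq> E" using Fk_sub kt by simp
  have fkE: "fs ! k \<in> E" using fE kt by simp
  show ?case
  proof (cases "odd k")
    case True
    have "r (Fk (Suc k)) = r (Fk k)" using clo[OF True Suc(1) kt] eq by simp
    moreover have "r (E - Fk (Suc k)) \<le> r (E - Fk k)" by (rule mono) (use eq in auto)
    ultimately show ?thesis using IH by linarith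
  next
    case False
    then have ev: "even (k - 2)" "k - 2 + 2 < t" using Suc kt by auto
    have T: "triad M {fs ! (k-2), fs ! (k-2+1), fs ! (k-2+2)}" by (rule tri[OF ev])
    have e1: "k - 2 + 1 = k - 1" "k - 2 + 2 = k" using Suc by auto
    have TF: "{fs ! (k-2), fs ! (k-2+1), fs ! (k-2+2)} \<subseteq> Fk (Suc k)" unfolding e1 Fk_def by auto
    have "r (insert (fs ! k) (E - Fk (Suc k))) = r (E - Fk (Suc k)) + 1"
      by (rule triad_notcl[OF T]) (use TF e1 in auto)
    moreover have "insert (fs ! k) (E - Fk (Suc k)) = E - Fk k"
      using eq fkE Fk_mem[of k k] kt by auto
    ultimately have "r (E - Fk k) = r (E - Fk (Suc k)) + 1" by simp
    moreover have "r (Fk (Suc k)) \<le> r (Fk k) + 1" using unit[OF FkE fkE] eq by simp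
    ultimately show ?thesis using IH by linarith
  qed
qed

lemma card_F: "card F = t" using setfs distinct_card dist by blast

lemma extc: assumes "odd t" "q \<in> E" "q \<notin> F" "r (insert q F) = r F" shows False
proof -
  have qn: "q \<notin> set fs" using assms setfs by simp
  have A: "distinct (fs @ [q])" using dist qn by simp
  have B: "set (fs @ [q]) = insert q F" using setfs by auto
  have C: "insert q F \<subseteq> E" using FsubE assms by auto
  have D: "4 \<le> length (fs @ [q])" using t4 by simp
  have Tr: "\<forall>k. odd k \<and> 1 \<le> k \<and> k \<le> length (fs @ [q]) - 2 \<longrightarrow>
         triad M {(fs @ [q]) ! (k - 1), (fs @ [q]) ! k, (fs @ [q]) ! (k + 1)}"
  proof (intro allI impI)
    fix k assume k: "odd k \<and> 1 \<le> k \<and> k \<le> length (fs @ [q]) - 2"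
    then have "k \<le> t - 1" by simp
    then have "k \<le> t - 2" using assms(1) k by presburger
    then have "triad M {fs ! (k - 1), fs ! k, fs ! (k + 1)}" using fo k unfolding flan_ordering_def by blast
    moreover have "k + 1 < t" "k - 1 < t" "k < t" using \<open>k \<le> t - 2\<close> t4 by linarith+
    ultimately show "triad M {(fs @ [q]) ! (k - 1), (fs @ [q]) ! k, (fs @ [q]) ! (k + 1)}"
      by (simp add: nth_append)
  qed
  have Cl: "\<forall>k. even k \<and> 4 \<le> k \<and> k \<le> length (fs @ [q]) \<longrightarrow>
         (fs @ [q]) ! (k - 1) \<in> cl M (set (take (k - 1) (fs @ [q])))"
  proof (intro allI impI)
    fix k assume k: "even k \<and> 4 \<le> k \<and> k \<le> length (fs @ [q])"
    show "(fs @ [q]) ! (k - 1) \<in> cl M (set (take (k - 1) (fs @ [q])))"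
    proof (cases "k \<le> t")
      case True
      then have "fs ! (k - 1) \<in> cl M (set (take (k - 1) fs))" using fo k unfolding flan_ordering_def by blast
      moreover have "k - 1 < t" using True k by linarith
      ultimately show ?thesis by (simp add: nth_append)
    next
      case False
      have "k \<le> Suc t" using k by simp
      then have kk: "k - 1 = t" using False by linarith
      have "q \<in> cl M (set fs)" unfolding cl_def using assms setfs by simp
      then show ?thesis using kk by (simp add: nth_append)
    qed
  qed
  have "flan_ordering M (insert q F) (fs @ [q])"
    unfolding flan_ordering_def using A B C D Tr Cl by blast
  then have "flan M (insert q F)" unfolding flan_def by blast
  moreover have "F \<subset> insert q F" using assms by auto
  ultimately show False using mx unfolding maximal_flan_def by blast
qed

lemma lamb: assumes n: "even n" "4 \<le> n" "n < t" and cl: "r (insert (fs ! n) (Fk n)) = r (Fk n)"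
  shows False
proof -
  have ev: "even (n - 2)" "n - 2 + 2 < t" using n by auto
  have T: "triad M {fs ! (n-2), fs ! (n-2+1), fs ! (n-2+2)}" by (rule tri[OF ev])
  have e1: "n - 2 + 1 = n - 1" "n - 2 + 2 = n" using n by auto
  have eq: "Fk (Suc n) = insert (fs ! n) (Fk n)" by (rule Fk_Suc)
  have fnE: "fs ! n \<in> E" using fE n by simp
  have TF: "{fs ! (n-2), fs ! (n-2+1), fs ! (n-2+2)} \<subseteq> Fk (Suc n)" unfolding e1 Fk_def by auto
  have "r (insert (fs ! n) (E - Fk (Suc n))) = r (E - Fk (Suc n)) + 1"
    by (rule triad_notcl[OF T]) (use TF e1 in auto)
  moreover have "insert (fs ! n) (E - Fk (Suc n)) = E - Fk n"
    using eq fnE Fk_mem[of n n] n by auto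
  moreover have "r (Fk n) + r (E - Fk n) \<le> r E + 2" using lam_Fk n by simp
  ultimately have lam: "r (Fk (Suc n)) + r (E - Fk (Suc n)) \<le> r E + 1" using cl eq by simp
  have FS: "Fk (Suc n) \<subseteq> E" using Fk_sub n by simp
  have c2: "2 \<le> card (Fk (Suc n))" using card_Fk[of "Suc n"] n by simp
  have c1: "\<not> 2 \<le> card (E - Fk (Suc n))"
  proof
    assume "2 \<le> card (E - Fk (Suc n))"
    then have "r E + 2 \<le> r (Fk (Suc n)) + r (E - Fk (Suc n))" using T2[OF FS c2] by simp
    then show False using lam by linarith
  qed
  have FF: "Fk (Suc n) \<subseteq> F" using F_eq Fk_mono n by simp
  obtain q where q: "q \<in> E" "q \<notin> F" using FE FsubE by blast
  have finD: "finite (E - Fk (Suc n))" using finE by simp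
  have uniq: "\<And>x. x \<in> E - Fk (Suc n) \<Longrightarrow> x = q"
  proof (rule ccontr)
    fix x assume x: "x \<in> E - Fk (Suc n)" "x \<noteq> q"
    have "{x, q} \<subseteq> E - Fk (Suc n)" using x q FF by auto
    then have "card {x, q} \<le> card (E - Fk (Suc n))" using finD card_mono by blast
    then show False using x c1 by simp
  qed
  have FeqS: "F = Fk (Suc n)"
  proof
    show "F \<subseteq> Fk (Suc n)"
    proof
      fix x assume "x \<in> F"
      then show "x \<in> Fk (Suc n)" using uniq[of x] q FsubE by blast
    qed
  qed (rule FF)
  have "t = Suc n" using card_F FeqS card_Fk[of "Suc n"] n by simp
  then have odt: "odd t" using n by simp
  have "F = E - {q}" using uniq FeqS q FsubE by blast
  then have "insert q F = E" "r F = r E" using q rco1 by auto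
  then show False using extc[OF odt q] by simp
qed


lemma spec: assumes t5: "5 \<le> t"
  shows "r (insert (fs!4) (E - {fs!0, fs!1, fs!3, fs!4})) \<noteq> r (E - {fs!0, fs!1, fs!3, fs!4})"
proof -
  define f0 f1 f2 f3 f4 where "f0 = fs!0" "f1 = fs!1" "f2 = fs!2" "f3 = fs!3" "f4 = fs!4"
  have inE: "f0 \<in> E" "f1 \<in> E" "f2 \<in> E" "f3 \<in> E" "f4 \<in> E"
    unfolding f0_f1_f2_f3_f4_def by (rule fE, use t5 in linarith)+
  have d: "f0 \<noteq> f1" "f0 \<noteq> f2" "f0 \<noteq> f3" "f0 \<noteq> f4" "f1 \<noteq> f2" "f1 \<noteq> f3" "f1 \<noteq> f4"
     "f2 \<noteq> f3" "f2 \<noteq> f4" "f3 \<noteq> f4"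
    unfolding f0_f1_f2_f3_f4_def by (rule fne, use t5 in linarith, use t5 in linarith, simp)+
  have T1: "triad M {f0, f1, f2}" using T1tri unfolding f0_f1_f2_f3_f4_def .
  have T3: "triad M {f2, f3, f4}" using tri[of 2] t5 unfolding f0_f1_f2_f3_f4_def by simp
  have F4: "Fk 4 = {f0,f1,f2,f3}" using F4eq unfolding f0_f1_f2_f3_f4_def .
  have A1: "r (insert f2 (E - {f0,f1,f2,f3})) = r (E - {f0,f1,f2,f3}) + 1"
    by (rule triad_notcl[OF T1]) auto
  have A2: "insert f2 (E - {f0,f1,f2,f3}) = E - {f0,f1,f3}" using inE d by auto
  have F4E: "Fk 4 \<subseteq> E" using Fk_sub t5 by simp
  have cF4: "2 \<le> card (Fk 4)" using card_Fk[of 4] t5 by simp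
  have "card (E - Fk 4) = card E - 4" using card_Diff_subset[OF _ F4E] card_Fk[of 4] t5 F4E finE
    by (simp add: finite_subset)
  then have cE4: "2 \<le> card (E - Fk 4)" using big by simp
  have "r E + 2 \<le> r (Fk 4) + r (E - Fk 4)" by (rule T2[OF F4E cF4 cE4])
  then have "r E + 2 \<le> 3 + r (E - {f0,f1,f2,f3})" using rF4 F4 by simp
  then have "r E \<le> r (E - {f0,f1,f3})" using A1 A2 by simp
  then have S1: "r (E - {f0,f1,f3}) = r E" using rE[of "E - {f0,f1,f3}"] by simp
  have H: "r ((E - {f0,f1,f2}) \<union> (E - {f2,f3,f4})) + r ((E - {f0,f1,f2}) \<inter> (E - {f2,f3,f4}))
     \<le> r (E - {f0,f1,f2}) + r (E - {f2,f3,f4})" by (rule submod) auto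
  have U: "(E - {f0,f1,f2}) \<union> (E - {f2,f3,f4}) = E - {f2}" using d by auto
  have I: "(E - {f0,f1,f2}) \<inter> (E - {f2,f3,f4}) = E - {f0,f1,f2,f3,f4}" by auto
  have "r (E - {f2}) = r E" using rco1 inE by simp
  moreover have "r (E - {f0,f1,f2}) < r E" using triadE(3)[OF T1] .
  moreover have "r (E - {f2,f3,f4}) < r E" using triadE(3)[OF T3] .
  ultimately have R5: "r (E - {f0,f1,f2,f3,f4}) + 2 \<le> r E" using H U I by simp
  have W: "E - {f0,f1,f3,f4} = insert f2 (E - {f0,f1,f2,f3,f4})" using inE d by auto
  have "r (E - {f0,f1,f3,f4}) \<le> r (E - {f0,f1,f2,f3,f4}) + 1" unfolding W by (rule unit) (use inE in auto)
  then have "r (E - {f0,f1,f3,f4}) < r E" using R5 by simp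
  moreover have "insert f4 (E - {f0,f1,f3,f4}) = E - {f0,f1,f3}" using inE d by auto
  ultimately show ?thesis using S1 unfolding f0_f1_f2_f3_f4_def by simp
qed

end

context m3
begin

lemma card_ge2_of: assumes "finite A" "x \<in> A" "y \<in> A" "x \<noteq> y" shows "2 \<le> card A"
proof -
  have "card {x,y} \<le> card A" using assms by (intro card_mono) auto
  then show ?thesis using assms by simp
qed

lemma H1e: assumes e: "e \<in> E"
  shows "\<forall>X. X \<subseteq> E - {e} \<longrightarrow> X \<noteq> {} \<longrightarrow> E - {e} - X \<noteq> {} \<longrightarrow>
            r E + r {e} + 1 \<le> r (X \<union> {e}) + r (E - X)"
proof (intro allI impI)
  fix X assume X: "X \<subseteq> E - {e}" "X \<noteq> {}" "E - {e} - X \<noteq> {}"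
  have re: "r {e} = 1" using r1 e by simp
  have finX: "finite X" using X finE finite_subset by blast
  show "r E + r {e} + 1 \<le> r (X \<union> {e}) + r (E - X)"
  proof (cases "card X = 1")
    case True
    then obtain x where x: "X = {x}" by (auto simp: card_Suc_eq)
    have "r {e, x} = 2" using r2 x X e by auto
    moreover have "r (E - {x}) = r E" using rco1 x X by auto
    ultimately show ?thesis using x re by simp
  next
    case False
    then have c1: "2 \<le> card X" using X finX by (simp add: card_gt_0_iff Suc_le_eq le_neq_implies_less
          del: One_nat_def) (metis One_nat_def Suc_1 Suc_leI card_gt_0_iff less_le)
    obtain y where y: "y \<in> E - {e} - X" using X by blast
    have c2: "2 \<le> card (E - X)" by (rule card_ge2_of[of _ e y]) (use e y X finE in auto)
    have "r E + 2 \<le> r X + r (E - X)" using T2 X c1 c2 by auto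
    moreover have "r X \<le> r (X \<union> {e})" by (rule mono) (use X e in auto)
    ultimately show ?thesis using re by linarith
  qed
qed

lemma sep2e_cl: assumes e: "e \<in> E" and s: "sep2 {e} X" shows "r (insert e X) = r X"
proof -
  have X: "X \<subseteq> E - {e}" "2 \<le> card X" "2 \<le> card (E - {e} - X)" "lamok {e} X"
    using s unfolding sep2_def by auto
  have "card (E - {e} - X) \<le> card (E - X)" by (rule card_mono) (use finE in auto)
  then have c2: "2 \<le> card (E - X)" using X by simp
  have "r E + 2 \<le> r X + r (E - X)" using T2 X c2 by auto
  moreover have "r (X \<union> {e}) + r (E - X) \<le> r E + r {e} + 1" using X unfolding lamok_def by simp
  moreover have "r {e} = 1" using r1 e by simp
  moreover have "r X \<le> r (insert e X)" by (rule mono) (use X e in auto)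
  ultimately show ?thesis by simp
qed

lemma sep2e_card: assumes e: "e \<in> E" and nt: "\<not> in_triangle M e" and s: "sep2 {e} X"
  shows "3 \<le> card X"
proof (rule ccontr)
  assume "\<not> 3 \<le> card X"
  moreover have X: "X \<subseteq> E - {e}" "2 \<le> card X" using s unfolding sep2_def by auto
  ultimately have "card X = 2" by simp
  then obtain x y where xy: "X = {x,y}" "x \<noteq> y" by (meson card_2_iff)
  have "r {x, y, e} = 3" using no_tri[OF nt] xy X e by auto
  moreover have "r (insert e X) = r X" using sep2e_cl[OF e s] .
  moreover have "r X \<le> 2" using rcard[of X] X \<open>card X = 2\<close> by auto
  moreover have "insert e X = {x,y,e}" using xy by auto
  ultimately show False by simp
qed

lemma final_e: assumes e: "e \<in> E" and s: "sep2 {e} X" and T: "triad M T" "e \<in> T" and d: "X \<inter> T = {}"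
  shows False
proof -
  have X: "X \<subseteq> E - T" using s d unfolding sep2_def by auto
  have "r (insert e X) = r X + 1" by (rule triad_notcl[OF T X])
  then show False using sep2e_cl[OF e s] by simp
qed

lemma H1ab: assumes ab: "a \<in> E" "b \<in> E" "a \<noteq> b" and nta: "\<not> in_triangle M a"
  and tcA: "\<forall>X. X \<subseteq> E - {a} \<longrightarrow> 2 \<le> card X \<longrightarrow> 2 \<le> card (E - {a} - X) \<longrightarrow>
               r E + 1 + 2 \<le> r (X \<union> {a}) + r (E - X)"
  shows "\<forall>X. X \<subseteq> E - {a,b} \<longrightarrow> X \<noteq> {} \<longrightarrow> E - {a,b} - X \<noteq> {} \<longrightarrow>
            r E + r {a,b} + 1 \<le> r (X \<union> {a,b}) + r (E - X)"
proof (intro allI impI)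
  fix X assume X: "X \<subseteq> E - {a,b}" "X \<noteq> {}" "E - {a,b} - X \<noteq> {}"
  have rab: "r {a,b} = 2" using r2 ab by simp
  have finX: "finite X" using X finE finite_subset by blast
  have finY: "finite (E - {a,b} - X)" using finE by simp
  show "r E + r {a,b} + 1 \<le> r (X \<union> {a,b}) + r (E - X)"
  proof (cases "card X = 1")
    case True
    then obtain x where x: "X = {x}" by (auto simp: card_Suc_eq)
    have "r {x, b, a} = 3" using no_tri[OF nta] x X ab by auto
    moreover have "{x,b,a} = X \<union> {a,b}" using x by auto
    moreover have "r (E - {x}) = r E" using rco1 x X by auto
    ultimately show ?thesis using x rab by simp
  next
    case F1: False
    show ?thesis
    proof (cases "card (E - {a,b} - X) = 1")
      case True
      then obtain y where y: "E - {a,b} - X = {y}" by (auto simp: card_Suc_eq)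
      have yE: "y \<in> E" "y \<noteq> a" "y \<noteq> b" using y by auto
      have "r {y, b, a} = 3" using no_tri[OF nta] yE ab by auto
      moreover have "E - X = {y,b,a}" using y X ab by auto
      moreover have "X \<union> {a,b} = E - {y}" using y X ab by auto
      moreover have "r (E - {y}) = r E" using rco1 yE by auto
      ultimately show ?thesis using rab by simp
    next
      case False
      have c1: "2 \<le> card X" using F1 X finX by (metis One_nat_def Suc_1 Suc_leI card_gt_0_iff le_neq_implies_less Suc_le_eq)
      have c0: "2 \<le> card (E - {a,b} - X)" using False X finY
        by (metis One_nat_def Suc_1 Suc_leI card_gt_0_iff le_neq_implies_less Suc_le_eq)
      have "card (E - {a,b} - X) \<le> card (E - {a} - X)" by (rule card_mono) (use finE in auto)
      then have c2: "2 \<le> card (E - {a} - X)" using c0 by simp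
      have "r E + 1 + 2 \<le> r (X \<union> {a}) + r (E - X)" using tcA X c1 c2 by auto
      moreover have "r (X \<union> {a}) \<le> r (X \<union> {a,b})" by (rule mono) (use X ab in auto)
      ultimately show ?thesis using rab by linarith
    qed
  qed
qed

lemma sep2ab_cl: assumes ab: "a \<in> E" "b \<in> E" "a \<noteq> b"
  and tcA: "\<forall>X. X \<subseteq> E - {a} \<longrightarrow> 2 \<le> card X \<longrightarrow> 2 \<le> card (E - {a} - X) \<longrightarrow>
               r E + 1 + 2 \<le> r (X \<union> {a}) + r (E - X)"
  and s: "sep2 {a,b} X"
  shows "r (insert b (X \<union> {a})) = r (X \<union> {a})"
proof -
  have X: "X \<subseteq> E - {a,b}" "2 \<le> card X" "2 \<le> card (E - {a,b} - X)" "lamok {a,b} X"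
    using s unfolding sep2_def by auto
  have "card (E - {a,b} - X) \<le> card (E - {a} - X)" by (rule card_mono) (use finE in auto)
  then have c2: "2 \<le> card (E - {a} - X)" using X by simp
  have "r E + 1 + 2 \<le> r (X \<union> {a}) + r (E - X)" using tcA X c2 by auto
  moreover have "r (X \<union> {a,b}) + r (E - X) \<le> r E + r {a,b} + 1" using X unfolding lamok_def by simp
  moreover have "r {a,b} = 2" using r2 ab by simp
  moreover have "r (X \<union> {a}) \<le> r (insert b (X \<union> {a}))" by (rule mono) (use X ab in auto)
  moreover have "insert b (X \<union> {a}) = X \<union> {a,b}" by auto
  ultimately show ?thesis by simp
qed

lemma sep2ab_card2: assumes ab: "a \<in> E" "b \<in> E" "a \<noteq> b" and s: "sep2 {a,b} X" and c: "card X = 2"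
  shows "r (X \<union> {a,b}) \<le> 3"
proof -
  have X: "X \<subseteq> E - {a,b}" "lamok {a,b} X" using s unfolding sep2_def by auto
  obtain x y where xy: "X = {x,y}" "x \<noteq> y" using c by (meson card_2_iff)
  have "r (E - {x,y}) = r E" using rco2 xy X by auto
  moreover have "r (X \<union> {a,b}) + r (E - X) \<le> r E + r {a,b} + 1" using X unfolding lamok_def by simp
  moreover have "r {a,b} = 2" using r2 ab by simp
  ultimately show ?thesis using xy by simp
qed

lemma final_ab: assumes s: "sep2 {a,b} X" and ab: "a \<in> E" "b \<in> E" "a \<noteq> b"
  and tcA: "\<forall>X. X \<subseteq> E - {a} \<longrightarrow> 2 \<le> card X \<longrightarrow> 2 \<le> card (E - {a} - X) \<longrightarrow>
               r E + 1 + 2 \<le> r (X \<union> {a}) + r (E - X)"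
  and D: "D \<subseteq> E" "b \<in> D" "a \<notin> D" "X \<inter> D = {}" "r (insert b (E - D)) \<noteq> r (E - D)"
  shows False
proof -
  have X: "X \<subseteq> E - {a,b}" using s unfolding sep2_def by auto
  have "r (insert b (X \<union> {a})) = r (X \<union> {a}) + 1"
    by (rule notcl[OF mat, of _ "E - D"]) (use X D ab in auto)
  then show False using sep2ab_cl[OF ab tcA s] by simp
qed


lemma sep2_card_le: "sep2 K X \<Longrightarrow> card X \<le> card (E - K - (E - K - X))"
  unfolding sep2_def by (simp add: Diff_Diff_Int Int_absorb1)

lemma onemove_half: assumes K: "K \<subseteq> E" and P: "P \<subseteq> E - K" "card P = 3"
  and HCl: "\<forall>x\<in>P. r (insert x ((P - {x}) \<union> K)) = r ((P - {x}) \<union> K)"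
  and HC: "3 \<le> card (E - K - X)"
  and HF: "\<forall>Z. sep2 K Z \<longrightarrow> Z \<inter> P = {} \<longrightarrow> False"
  and s: "sep2 K X" and c: "2 \<le> card (P \<inter> X)"
  shows False
proof -
  have X: "X \<subseteq> E - K" "2 \<le> card X" "2 \<le> card (E - K - X)" "lamok K X" using s unfolding sep2_def by auto
  have finP: "finite P" using P by (metis card.infinite zero_neq_numeral)
  have sY: "sep2 K (E - K - X)" by (rule sep2_sym[OF K s])
  have eY: "E - K - (E - K - X) = X" using X by auto
  show False
  proof (cases "P \<subseteq> X")
    case True
    then have "(E - K - X) \<inter> P = {}" by auto
    then show False using HF sY by blast
  next
    case False
    then obtain s0 where s0: "s0 \<in> P" "s0 \<notin> X" by blast
    have "P \<inter> X \<subseteq> P - {s0}" using s0 by auto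
    moreover have "card (P - {s0}) = 2" using P s0 finP by simp
    ultimately have PX: "P \<inter> X = P - {s0}"
      using c finP by (metis card_seteq finite_Diff)
    have s0Y: "s0 \<in> E - K - X" using s0 P by auto
    have cY: "3 \<le> card (E - K - X)" by (rule HC)
    have st: "r (insert s0 (X \<union> K)) = r (X \<union> K)"
      by (rule stepC[of "P - {s0}"]) (use PX K X s0 P HCl in auto)
    have lam: "lamok K (insert s0 X)" using move[OF K X(1) s0Y X(4)] st by blast
    have finY: "finite (E - K - X)" using finE by simp
    have "E - K - insert s0 X = (E - K - X) - {s0}" by auto
    then have cY2: "2 \<le> card (E - K - insert s0 X)" using cY s0Y finY by simp
    have finX: "finite X" using X finE finite_subset by blast
    have "card X \<le> card (insert s0 X)" by (rule card_mono) (use finX in auto)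
    then have "2 \<le> card (insert s0 X)" using X by simp
    then have s2: "sep2 K (insert s0 X)" unfolding sep2_def using lam cY2 X s0Y by auto
    have "P \<subseteq> insert s0 X" using PX by auto
    then have "(E - K - insert s0 X) \<inter> P = {}" by auto
    then show False using HF sep2_sym[OF K s2] by blast
  qed
qed

lemma onemove: assumes K: "K \<subseteq> E" and P: "P \<subseteq> E - K" "card P = 3"
  and HCl: "\<forall>x\<in>P. r (insert x ((P - {x}) \<union> K)) = r ((P - {x}) \<union> K)"
  and HC: "3 \<le> card X" "3 \<le> card (E - K - X)"
  and HF: "\<forall>Z. sep2 K Z \<longrightarrow> Z \<inter> P = {} \<longrightarrow> False"
  shows "\<not> sep2 K X"
proof
  assume s: "sep2 K X"
  have X: "X \<subseteq> E - K" using s unfolding sep2_def by auto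
  have finP: "finite P" using P by (metis card.infinite zero_neq_numeral)
  have un: "P = (P \<inter> X) \<union> (P \<inter> (E - K - X))" using P by auto
  have "card P = card (P \<inter> X) + card (P \<inter> (E - K - X))"
    by (subst un, rule card_Un_disjoint) (use finP in auto)
  then have "2 \<le> card (P \<inter> X) \<or> 2 \<le> card (P \<inter> (E - K - X))" using P by linarith
  then show False
  proof
    assume "2 \<le> card (P \<inter> X)"
    then show False using onemove_half[OF K P HCl HC(2) HF s] by blast
  next
    assume c2: "2 \<le> card (P \<inter> (E - K - X))"
    have "E - K - (E - K - X) = X" using X by auto
    then have "3 \<le> card (E - K - (E - K - X))" using HC(1) by simp
    then show False using onemove_half[OF K P HCl _ HF sep2_sym[OF K s] c2] by blast
  qed
qed

end

context fl
begin

lemma P4: assumes c: "c < 3" and nt: "\<not> in_triangle M (fs!c)"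
  shows "Fk 4 - {fs!c} \<subseteq> E - {fs!c}" "card (Fk 4 - {fs!c}) = 3"
    "\<forall>x\<in>Fk 4 - {fs!c}. r (insert x ((Fk 4 - {fs!c} - {x}) \<union> {fs!c})) = r ((Fk 4 - {fs!c} - {x}) \<union> {fs!c})"
proof -
  have F4E: "Fk 4 \<subseteq> E" using Fk_sub t4 by simp
  have aF: "fs!c \<in> Fk 4" using Fk_mem[of c 4] c t4 by simp
  have aE: "fs!c \<in> E" using aF F4E by auto
  show "Fk 4 - {fs!c} \<subseteq> E - {fs!c}" using F4E by auto
  have finF: "finite (Fk 4)" using F4E finE finite_subset by blast
  show c3: "card (Fk 4 - {fs!c}) = 3" using card_Fk[of 4] t4 aF finF by simp
  show "\<forall>x\<in>Fk 4 - {fs!c}. r (insert x ((Fk 4 - {fs!c} - {x}) \<union> {fs!c})) = r ((Fk 4 - {fs!c} - {x}) \<union> {fs!c})"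
  proof
    fix x assume x: "x \<in> Fk 4 - {fs!c}"
    have "card (Fk 4 - {fs!c} - {x}) = 2" using c3 x finF by simp
    then obtain y z where yz: "Fk 4 - {fs!c} - {x} = {y,z}" "y \<noteq> z" by (meson card_2_iff)
    have yzE: "y \<in> E" "z \<in> E" "y \<noteq> fs!c" "z \<noteq> fs!c" using yz F4E by auto
    have "r {y, z, fs!c} = 3" using no_tri[OF nt] yzE yz aE by auto
    moreover have "(Fk 4 - {fs!c} - {x}) \<union> {fs!c} = {y, z, fs!c}" using yz by auto
    ultimately have r3: "r ((Fk 4 - {fs!c} - {x}) \<union> {fs!c}) = 3" by simp
    have "insert x ((Fk 4 - {fs!c} - {x}) \<union> {fs!c}) = Fk 4" using x aF by auto
    then have "r (insert x ((Fk 4 - {fs!c} - {x}) \<union> {fs!c})) \<le> 3" using rF4 by simp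
    moreover have "r ((Fk 4 - {fs!c} - {x}) \<union> {fs!c}) \<le> r (insert x ((Fk 4 - {fs!c} - {x}) \<union> {fs!c}))"
      by (rule mono) (use x F4E aE in auto)
    ultimately show "r (insert x ((Fk 4 - {fs!c} - {x}) \<union> {fs!c})) = r ((Fk 4 - {fs!c} - {x}) \<union> {fs!c})"
      using r3 by simp
  qed
qed

lemma tc_fi: assumes c: "c < 3" and nt: "\<not> in_triangle M (fs!c)"
  shows "three_connected (contract M (fs!c))"
proof -
  define e where "e = fs!c"
  have eE: "e \<in> E" unfolding e_def using fE c t4 by simp
  have eF: "e \<in> Fk 4" unfolding e_def using Fk_mem[of c 4] c t4 by simp
  have T1F: "{fs!0, fs!1, fs!2} \<subseteq> Fk 4" using F3eq Fk_mono[of 3 4] by simp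
  have eT: "e \<in> {fs!0, fs!1, fs!2}" unfolding e_def using c by (auto simp: less_Suc_eq numeral_nat)
  have H2: "\<forall>X. \<not> sep2 {e} X"
  proof (intro allI notI)
    fix X assume sX: "sep2 {e} X"
    have ntE: "\<not> in_triangle M e" using nt unfolding e_def .
    have c1: "3 \<le> card X" by (rule sep2e_card[OF eE ntE sX])
    have c2: "3 \<le> card (E - {e} - X)" by (rule sep2e_card[OF eE ntE sep2_sym[OF _ sX]]) (use eE in simp)
    have "\<not> sep2 {e} X"
    proof (rule onemove[of "{e}" "Fk 4 - {e}"])
      show "{e} \<subseteq> E" using eE by simp
      show "Fk 4 - {e} \<subseteq> E - {e}" "card (Fk 4 - {e}) = 3"
        "\<forall>x\<in>Fk 4 - {e}. r (insert x ((Fk 4 - {e} - {x}) \<union> {e})) = r ((Fk 4 - {e} - {x}) \<union> {e})"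
        using P4[OF c nt] unfolding e_def by auto
      show "3 \<le> card X" by (rule c1)
      show "3 \<le> card (E - {e} - X)" by (rule c2)
      show "\<forall>Z. sep2 {e} Z \<longrightarrow> Z \<inter> (Fk 4 - {e}) = {} \<longrightarrow> False"
      proof (intro allI impI)
        fix Z assume Z: "sep2 {e} Z" "Z \<inter> (Fk 4 - {e}) = {}"
        have "Z \<subseteq> E - {e}" using Z unfolding sep2_def by auto
        then have "Z \<inter> {fs!0, fs!1, fs!2} = {}" using Z T1F by auto
        then show False using final_e[OF eE Z(1) T1tri eT] by blast
      qed
    qed
    then show False using sX by simp
  qed
  have "three_connected (E - {e}, \<lambda>X. r (X \<union> {e}) - r {e})"
    by (rule tc_cK) (use eE H1e[OF eE] H2 in auto)
  then show ?thesis unfolding e_def contract_eq .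
qed

end

context m3
begin

lemma pigeon: assumes K: "K \<subseteq> E" and P: "P \<subseteq> E - K" "card P = 3"
  and H: "\<forall>X. sep2 K X \<longrightarrow> 2 \<le> card (P \<inter> X) \<longrightarrow> False"
  shows "\<not> sep2 K X"
proof
  assume s: "sep2 K X"
  have X: "X \<subseteq> E - K" using s unfolding sep2_def by auto
  have finP: "finite P" using P by (metis card.infinite zero_neq_numeral)
  have un: "P = (P \<inter> X) \<union> (P \<inter> (E - K - X))" using P by auto
  have "card P = card (P \<inter> X) + card (P \<inter> (E - K - X))"
    by (subst un, rule card_Un_disjoint) (use finP in auto)
  then have "2 \<le> card (P \<inter> X) \<or> 2 \<le> card (P \<inter> (E - K - X))" using P by linarith
  then show False using H s sep2_sym[OF K s] by blast
qed

lemma stepD_from: assumes "G \<subseteq> E" "g \<in> E" "g \<notin> G" "D \<subseteq> insert g G" "D \<subseteq> E"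
  "r (insert g (E - D)) \<noteq> r (E - D)"
  shows "r (E - G) \<noteq> r (E - insert g G)"
proof -
  have "r (insert g (E - insert g G)) = r (E - insert g G) + 1"
    by (rule notcl[OF mat, of _ "E - D"]) (use assms in auto)
  moreover have "insert g (E - insert g G) = E - G" using assms by auto
  ultimately show ?thesis by simp
qed

lemma triad_D: assumes "triad M T" "g \<in> T" shows "r (insert g (E - T)) \<noteq> r (E - T)"
proof -
  have "insert g (E - T) = E - (T - {g})" using assms triadE(1)[OF assms(1)] by auto
  then show ?thesis using triadE(3,4)[OF assms(1)] assms(2) by simp
qed

end

context fl
begin

lemma corank_step: assumes "even l" "4 \<le> l" "l < t"
  shows "r (E - Fk l) \<noteq> r (E - insert (fs!l) (Fk l))"
proof -
  have ev: "even (l - 2)" "l - 2 + 2 < t" using assms by auto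
  have T: "triad M {fs ! (l-2), fs ! (l-2+1), fs ! (l-2+2)}" by (rule tri[OF ev])
  have e1: "l - 2 + 1 = l - 1" "l - 2 + 2 = l" using assms by auto
  show ?thesis
  proof (rule stepD_from[OF _ _ _ _ _ triad_D[OF T]])
    show "Fk l \<subseteq> E" using Fk_sub assms by simp
    show "fs ! l \<in> E" using fE assms by simp
    show "fs ! l \<notin> Fk l" using Fk_mem[of l l] assms by simp
    show "{fs ! (l-2), fs ! (l-2+1), fs ! (l-2+2)} \<subseteq> insert (fs ! l) (Fk l)"
      unfolding e1 Fk_def using assms by auto
    show "{fs ! (l-2), fs ! (l-2+1), fs ! (l-2+2)} \<subseteq> E" using triadE(1)[OF T] .
    show "fs ! l \<in> {fs ! (l-2), fs ! (l-2+1), fs ! (l-2+2)}" using e1 by simp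
  qed
qed

lemma half_j: assumes n: "even n" "4 \<le> n" "n < t" and nt: "\<not> in_triangle M (fs!n)"
  and s: "sep2 {fs!n} X" and pq: "p \<in> Fk 3" "q \<in> Fk 3" "p \<noteq> q" "p \<in> X" "q \<in> X"
  shows False
proof -
  define e where "e = fs!n"
  have eE: "e \<in> E" unfolding e_def using fE n by simp
  have F3E: "Fk 3 \<subseteq> E" using Fk_sub t4 by simp
  have finF3: "finite (Fk 3)" using F3E finE finite_subset by blast
  have "card (Fk 3 - {p,q}) = 1" using card_Fk[of 3] t4 pq finF3 by (simp add: card_Diff_subset)
  then obtain s0 where s0: "Fk 3 - {p,q} = {s0}" by (auto simp: card_Suc_eq)
  have P3: "Fk 3 = {p,q,s0}" using s0 pq by auto
  define g where "g = (\<lambda>l. if l = 0 then p else if l = 1 then q else if l = 2 then s0 else fs!l)"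
  have u3: "{..<3::nat} = {0,1,2}" by (simp add: lessThan_Suc numeral_eq_Suc insert_commute)
  have g3: "g ` {..<3} = Fk 3" unfolding u3 g_def P3 by (simp add: insert_commute)
  have gimg: "\<And>l. 3 \<le> l \<Longrightarrow> g ` {..<l} = Fk l"
  proof -
    fix l :: nat assume l: "3 \<le> l"
    have u: "{..<l} = {..<3} \<union> {3..<l}" using l by auto
    have "g ` {3..<l} = (!) fs ` {3..<l}" unfolding g_def by (intro image_cong) auto
    moreover have "Fk l = Fk 3 \<union> (!) fs ` {3..<l}" unfolding Fk_def u image_Un ..
    ultimately show "g ` {..<l} = Fk l" unfolding u image_Un g3 by simp
  qed
  have eF3: "e \<notin> Fk 3" unfolding e_def using Fk_mem[of n 3] n by simp
  have K: "{e} \<subseteq> E" using eE by simp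
  have X: "X \<subseteq> E - {e}" "lamok {e} X" "2 \<le> card (E - {e} - X)" "2 \<le> card X"
    using s unfolding sep2_def e_def by auto
  have gE: "\<forall>l<n. g l \<in> E - {e}"
  proof (intro allI impI)
    fix l assume l: "l < n"
    show "g l \<in> E - {e}"
    proof (cases "l < 3")
      case True
      then have "g l \<in> Fk 3" unfolding g_def P3 by auto
      then show ?thesis using F3E eF3 by auto
    next
      case False
      then have "g l = fs!l" unfolding g_def by auto
      moreover have "fs!l \<noteq> e" unfolding e_def using fne l n by simp
      ultimately show ?thesis using fE l n by simp
    qed
  qed
  have st: "\<forall>l<n. g l \<in> X \<or> r (insert (g l) (g ` {..<l} \<union> {e})) = r (g ` {..<l} \<union> {e})
                    \<or> r (E - g ` {..<l}) \<noteq> r (E - insert (g l) (g ` {..<l}))"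
  proof (intro allI impI)
    fix l assume l: "l < n"
    consider "l = 0" | "l = 1" | "l = 2" | "3 \<le> l" by linarith
    then show "g l \<in> X \<or> r (insert (g l) (g ` {..<l} \<union> {e})) = r (g ` {..<l} \<union> {e})
                    \<or> r (E - g ` {..<l}) \<noteq> r (E - insert (g l) (g ` {..<l}))"
    proof cases
      case 1 then show ?thesis using pq unfolding g_def by simp
    next
      case 2 then show ?thesis using pq unfolding g_def by simp
    next
      case 3
      have u2: "{..<2::nat} = {0,1}" by (simp add: lessThan_Suc numeral_eq_Suc insert_commute)
      have g2: "g ` {..<2} = {p,q}" unfolding u2 g_def by (simp add: insert_commute)
      have T: "triad M {fs!0, fs!1, fs!2}" by (rule T1tri)
      have TT: "{fs!0, fs!1, fs!2} = {p,q,s0}" using P3 F3eq by simp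
      have "r (E - {p,q}) \<noteq> r (E - {p,q,s0})"
      proof -
        have d: "{p,q,s0} - {s0} = {p,q}" using s0 by auto
        have s0T: "s0 \<in> {fs!0, fs!1, fs!2}" using TT by simp
        have "r (E - ({fs!0, fs!1, fs!2} - {s0})) = r E" using triadE(4)[OF T s0T] .
        then have "r (E - {p,q}) = r E" using TT d by simp
        moreover have "r (E - {p,q,s0}) < r E" using triadE(3)[OF T] TT by simp
        ultimately show ?thesis by simp
      qed
      then show ?thesis using 3 g2 unfolding g_def by (simp add: insert_commute)
    next
      case 4
      have gl: "g l = fs!l" using 4 unfolding g_def by auto
      have gi: "g ` {..<l} = Fk l" using gimg 4 by simp
      have lt: "l < t" using l n by simp
      show ?thesis
      proof (cases "odd l")
        case True
        have "r (insert (fs!l) (Fk l)) = r (Fk l)" using clo[OF True 4 lt] .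
        then have "r (insert (fs!l) (Fk l \<union> {e})) = r (Fk l \<union> {e})"
          using clmono[OF mat, of "Fk l" "Fk l \<union> {e}" "fs!l"] Fk_sub[of l] lt eE fE[OF lt] by auto
        then show ?thesis using gl gi by simp
      next
        case False
        moreover have "4 \<le> l" using False 4 by presburger
        ultimately have "r (E - Fk l) \<noteq> r (E - insert (fs!l) (Fk l))" using corank_step lt by simp
        then show ?thesis using gl gi by simp
      qed
    qed
  qed
  obtain X' where X': "X \<subseteq> X'" "X' \<subseteq> E - {e}" "lamok {e} X'" "2 \<le> card (E - {e} - X')"
      "card (E - {e} - X') = 2 \<or> g ` {..<n} \<subseteq> X'"
    using absorb[OF K X(1) X(2) X(3) gE st] by blast
  have finX': "finite X'" using X' finE finite_subset by blast
  have "card X \<le> card X'" by (rule card_mono[OF finX' X'(1)])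
  then have s': "sep2 {e} X'" unfolding sep2_def using X' X by simp
  have sY: "sep2 {e} (E - {e} - X')" by (rule sep2_sym[OF K s'])
  have c3: "3 \<le> card (E - {e} - X')" using sep2e_card[OF eE _ sY] nt unfolding e_def by simp
  then have "Fk n \<subseteq> X'" using X'(5) gimg[of n] n by auto
  then have "fs!(n-2) \<in> X'" "fs!(n-1) \<in> X'" using Fk_mem n by auto
  moreover have ev: "even (n - 2)" "n - 2 + 2 < t" using n by auto
  have T: "triad M {fs ! (n-2), fs ! (n-2+1), fs ! (n-2+2)}" by (rule tri[OF ev])
  have e1: "n - 2 + 1 = n - 1" "n - 2 + 2 = n" using n by auto
  have T': "triad M {fs ! (n-2), fs ! (n-1), e}" using T unfolding e1 e_def .
  ultimately have "(E - {e} - X') \<inter> {fs ! (n-2), fs ! (n-1), e} = {}" by auto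
  then show False using final_e[OF eE sY T'] by simp
qed

end

context fl
begin

lemma two_elems: assumes "2 \<le> card A" obtains p q where "p \<in> A" "q \<in> A" "p \<noteq> q"
proof -
  have fin: "finite A" using assms by (metis card.infinite not_numeral_le_zero)
  have "A \<noteq> {}" using assms by auto
  then obtain p where p: "p \<in> A" by blast
  have "card (A - {p}) \<ge> 1" using assms p fin by simp
  then have "A - {p} \<noteq> {}" by (metis card.empty not_one_le_zero)
  then obtain q where "q \<in> A - {p}" by blast
  then show ?thesis using that p by blast
qed

lemma tc_fj: assumes n: "even n" "4 \<le> n" "n < t" and nt: "\<not> in_triangle M (fs!n)"
  shows "three_connected (contract M (fs!n))"
proof -
  define e where "e = fs!n"
  have eE: "e \<in> E" unfolding e_def using fE n by simp
  have F3E: "Fk 3 \<subseteq> E" using Fk_sub t4 by simp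
  have eF3: "e \<notin> Fk 3" unfolding e_def using Fk_mem[of n 3] n by simp
  have H2: "\<forall>X. \<not> sep2 {e} X"
  proof
    fix X
    show "\<not> sep2 {e} X"
    proof (rule pigeon[of "{e}" "Fk 3"])
      show "{e} \<subseteq> E" using eE by simp
      show "Fk 3 \<subseteq> E - {e}" using F3E eF3 by auto
      show "card (Fk 3) = 3" using card_Fk t4 by simp
      show "\<forall>X. sep2 {e} X \<longrightarrow> 2 \<le> card (Fk 3 \<inter> X) \<longrightarrow> False"
      proof (intro allI impI)
        fix X assume s: "sep2 {e} X" and c: "2 \<le> card (Fk 3 \<inter> X)"
        obtain p q where "p \<in> Fk 3 \<inter> X" "q \<in> Fk 3 \<inter> X" "p \<noteq> q" using two_elems[OF c] by blast
        then show False using half_j[OF n nt, of X p q] s unfolding e_def by auto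
      qed
    qed
  qed
  have "three_connected (E - {e}, \<lambda>X. r (X \<union> {e}) - r {e})"
    by (rule tc_cK) (use eE H1e[OF eE] H2 in auto)
  then show ?thesis unfolding e_def contract_eq .
qed


lemma tcA_of: assumes c: "c < 3" and nt: "\<not> in_triangle M (fs!c)"
  shows "\<forall>X. X \<subseteq> E - {fs!c} \<longrightarrow> 2 \<le> card X \<longrightarrow> 2 \<le> card (E - {fs!c} - X) \<longrightarrow>
               r E + 1 + 2 \<le> r (X \<union> {fs!c}) + r (E - X)"
proof (intro allI impI)
  fix X assume X: "X \<subseteq> E - {fs!c}" "2 \<le> card X" "2 \<le> card (E - {fs!c} - X)"
  have aE: "fs!c \<in> E" using fE c t4 by simp
  have tc: "three_connected (E - {fs!c}, \<lambda>X. r (X \<union> {fs!c}) - r {fs!c})"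
    using tc_fi[OF c nt] unfolding contract_eq .
  have "r E + r {fs!c} + 2 \<le> r (X \<union> {fs!c}) + r (E - X)"
    by (rule tc_cK_T2[OF _ tc X]) (use aE in simp)
  then show "r E + 1 + 2 \<le> r (X \<union> {fs!c}) + r (E - X)" using r1 aE by simp
qed

lemma cl3: assumes "x \<in> E" "y \<in> E" "z \<in> E" "w \<in> E" "r {x,y,z} = 3" "r {x,y,z,w} \<le> 3"
  shows "r (insert w {x,y,z}) = r {x,y,z}"
proof -
  have "r {x,y,z} \<le> r (insert w {x,y,z})" by (rule mono) (use assms in auto)
  moreover have "insert w {x,y,z} = {x,y,z,w}" by auto
  ultimately show ?thesis using assms by simp
qed

lemma npar_pre: assumes c: "c < 3" and ntA: "\<not> in_triangle M (fs!c)"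
  and n: "even n" "4 \<le> n" "n < t" and ntB: "\<not> in_triangle M (fs!n)"
  and y: "y1 \<in> E - {fs!c, fs!n}" "y2 \<in> E - {fs!c, fs!n}" "y1 \<noteq> y2" "r ({y1,y2} \<union> {fs!c, fs!n}) \<le> 3"
  shows "y1 \<in> Fk 3 \<or> y2 \<in> Fk 3"
    "r (insert (fs!n) {y1,y2,fs!c}) = r {y1,y2,fs!c}"
    "\<And>y. y \<in> {y1,y2} \<Longrightarrow> y' \<in> {y1, y2} \<Longrightarrow> y \<noteq> y' \<Longrightarrow> r (insert y' {y, fs!c, fs!n}) = r {y, fs!c, fs!n}"
proof -
  define a b where "a = fs!c" "b = fs!n"
  have aE: "a \<in> E" "b \<in> E" unfolding a_b_def using fE c n t4 by auto
  have ab: "a \<noteq> b" unfolding a_b_def using fne c n by simp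
  have yy: "y1 \<in> E" "y2 \<in> E" "y1 \<noteq> a" "y1 \<noteq> b" "y2 \<noteq> a" "y2 \<noteq> b" using y unfolding a_b_def by auto
  have r4: "r {y1, y2, b, a} \<le> 3" using y unfolding a_b_def by (simp add: insert_commute)
  have rA: "r {y1,y2,a} = 3" using no_tri[OF ntA] yy y aE unfolding a_b_def by auto
  have rB: "r {y1,y2,b} = 3" using no_tri[OF ntB] yy y aE unfolding a_b_def by auto
  have clA: "r (insert a {y1,y2,b}) = r {y1,y2,b}"
    by (rule cl3) (use yy aE rB r4 in auto)
  show "r (insert (fs!n) {y1,y2,fs!c}) = r {y1,y2,fs!c}"
    unfolding a_b_def[symmetric] by (rule cl3) (use yy aE rA r4 in \<open>auto simp: insert_commute\<close>)
  have "\<not> {y1,y2,b} \<subseteq> E - {fs!0, fs!1, fs!2}"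
  proof
    assume h: "{y1,y2,b} \<subseteq> E - {fs!0, fs!1, fs!2}"
    have "a \<in> {fs!0, fs!1, fs!2}" unfolding a_b_def using c by (auto simp: less_Suc_eq numeral_nat)
    then have "r (insert a {y1,y2,b}) = r {y1,y2,b} + 1" using triad_notcl[OF T1tri _ h] by blast
    then show False using clA by simp
  qed
  moreover have "b \<notin> {fs!0, fs!1, fs!2}" unfolding a_b_def using Fk_mem[of n 3] n t4 F3eq by simp
  ultimately have "y1 \<in> {fs!0, fs!1, fs!2} \<or> y2 \<in> {fs!0, fs!1, fs!2}" using yy aE by blast
  then show "y1 \<in> Fk 3 \<or> y2 \<in> Fk 3" using F3eq by simp
  fix y assume yin: "y \<in> {y1,y2}" "y' \<in> {y1, y2}" "y \<noteq> y'"
  have yE: "y \<in> E" "y \<noteq> b" "y \<noteq> a" "y' \<in> E" using yin yy by auto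
  have ntA': "\<not> in_triangle M a" using ntA unfolding a_b_def .
  have r3: "r {y, b, a} = 3" by (rule no_tri[OF ntA' yE(1) aE(2) aE(1) yE(2) yE(3) ab[symmetric]])
  have "{y1,y2,b,a} = {y, y', b, a}" using yin by blast
  then have "r {y, y', b, a} \<le> 3" using r4 by simp
  then have "r {y, b, a, y'} \<le> 3" by (simp add: insert_commute)
  then have "r (insert y' {y, b, a}) = r {y, b, a}"
    by (rule cl3[OF yE(1) aE(2) aE(1) yE(4) r3])
  then show "r (insert y' {y, fs!c, fs!n}) = r {y, fs!c, fs!n}" unfolding a_b_def by (simp add: insert_commute)
qed


lemma npar7: assumes c: "c < 3" and ntA: "\<not> in_triangle M (fs!c)"
  and n: "even n" "6 \<le> n" "n < t" and ntB: "\<not> in_triangle M (fs!n)"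
  and y: "y1 \<in> E - {fs!c, fs!n}" "y2 \<in> E - {fs!c, fs!n}" "y1 \<noteq> y2" "r ({y1,y2} \<union> {fs!c, fs!n}) \<le> 3"
  shows False
proof -
  have n4: "4 \<le> n" using n by simp
  note pre = npar_pre[OF c ntA n(1) n4 n(3) ntB y]
  have ev: "even (n - 2)" "n - 2 + 2 < t" using n by auto
  have T0: "triad M {fs ! (n-2), fs ! (n-2+1), fs ! (n-2+2)}" by (rule tri[OF ev])
  have e1: "n - 2 + 1 = n - 1" "n - 2 + 2 = n" using n by auto
  have T: "triad M {fs ! (n-2), fs ! (n-1), fs!n}" using T0 unfolding e1 .
  have aE: "fs!c \<in> E" "fs!n \<in> E" using fE c n t4 by auto
  have anT: "fs!c \<notin> {fs ! (n-2), fs ! (n-1), fs!n}" using fne[of c "n-2"] fne[of c "n-1"] fne[of c n] c n by auto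
  have "\<not> {y1,y2,fs!c} \<subseteq> E - {fs ! (n-2), fs ! (n-1), fs!n}"
  proof
    assume h: "{y1,y2,fs!c} \<subseteq> E - {fs ! (n-2), fs ! (n-1), fs!n}"
    have "r (insert (fs!n) {y1,y2,fs!c}) = r {y1,y2,fs!c} + 1" using triad_notcl[OF T _ h] by simp
    then show False using pre(2) by simp
  qed
  then have Tp: "y1 \<in> {fs ! (n-2), fs ! (n-1)} \<or> y2 \<in> {fs ! (n-2), fs ! (n-1)}" using y aE anT by auto
  have disj: "Fk 3 \<inter> {fs ! (n-2), fs ! (n-1)} = {}" using Fk_mem[of "n-2" 3] Fk_mem[of "n-1" 3] n by auto
  have sub: "Fk 3 \<union> {fs ! (n-2), fs ! (n-1)} \<subseteq> Fk n"
    using Fk_mono[of 3 n] Fk_mem[of "n-2" n] Fk_mem[of "n-1" n] n by auto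
  have "y1 \<in> Fk 3 \<union> {fs ! (n-2), fs ! (n-1)}" "y2 \<in> Fk 3 \<union> {fs ! (n-2), fs ! (n-1)}"
    using pre(1) Tp disj by blast+
  moreover have "fs!c \<in> Fk n" using Fk_mem[of c n] c n by simp
  ultimately have Y: "{y1,y2,fs!c} \<subseteq> Fk n" using sub by blast
  have "r (insert (fs!n) (Fk n)) = r (Fk n)"
    by (rule clmono[OF mat Y _ _ pre(2)]) (use Fk_sub n aE in auto)
  then show False using lamb n4 n by blast
qed

lemma npar5: assumes c: "c < 3" and ntA: "\<not> in_triangle M (fs!c)"
  and t5: "t = 5" and ntB: "\<not> in_triangle M (fs!4)"
  and y: "y1 \<in> E - {fs!c, fs!4}" "y2 \<in> E - {fs!c, fs!4}" "y1 \<noteq> y2" "r ({y1,y2} \<union> {fs!c, fs!4}) \<le> 3"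
  shows False
proof -
  have n: "even (4::nat)" "4 \<le> (4::nat)" "4 < t" using t5 by auto
  note pre = npar_pre[OF c ntA n ntB y]
  have aE: "fs!c \<in> E" "fs!4 \<in> E" using fE c t5 by auto
  have F5: "F = insert (fs!4) (Fk 4)" using F_eq t5 Fk_Suc[of 4] by (simp add: numeral_eq_Suc)
  have aF4: "fs!c \<in> Fk 4" using Fk_mem[of c 4] c t5 by simp
  have F4E: "Fk 4 \<subseteq> E" using Fk_sub t5 by simp
  obtain u u' where uu: "{u, u'} = {y1, y2}" "u \<in> Fk 3" "u \<noteq> u'"
    using pre(1) y(3) by blast
  have u'in: "u' \<in> {y1,y2}" "u \<in> {y1,y2}" using uu by auto
  have u'E: "u' \<in> E" "u' \<noteq> fs!4" using u'in y by auto
  have uF4: "u \<in> Fk 4" using uu(2) Fk_mono[of 3 4] by auto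
  show False
  proof (cases "u' \<in> F")
    case True
    then have "u' \<in> Fk 4" using F5 u'E by auto
    then have Y: "{y1,y2,fs!c} \<subseteq> Fk 4" using uF4 aF4 uu(1) by auto
    have "r (insert (fs!4) (Fk 4)) = r (Fk 4)"
      by (rule clmono[OF mat Y F4E aE(2) pre(2)])
    then show False using lamb[of 4] t5 by simp
  next
    case False
    have cl: "r (insert u' {u, fs!c, fs!4}) = r {u, fs!c, fs!4}" using pre(3)[OF u'in(2) u'in(1) uu(3)] .
    have "{u, fs!c, fs!4} \<subseteq> F" using uF4 aF4 F5 by auto
    then have "r (insert u' F) = r F" by (rule clmono[OF mat _ FsubE u'E(1) cl])
    moreover have "odd t" using t5 by simp
    ultimately show False using extc u'E False by blast
  qed
qed


lemma HClab: assumes c: "c < 3" and ntA: "\<not> in_triangle M (fs!c)" and b: "b \<in> E"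
  shows "\<forall>x\<in>Fk 4 - {fs!c}. r (insert x ((Fk 4 - {fs!c} - {x}) \<union> {fs!c, b})) = r ((Fk 4 - {fs!c} - {x}) \<union> {fs!c, b})"
proof
  fix x assume x: "x \<in> Fk 4 - {fs!c}"
  have h: "r (insert x ((Fk 4 - {fs!c} - {x}) \<union> {fs!c})) = r ((Fk 4 - {fs!c} - {x}) \<union> {fs!c})"
    using P4(3)[OF c ntA] x by blast
  have F4E: "Fk 4 \<subseteq> E" using Fk_sub t4 by simp
  have aE: "fs!c \<in> E" using fE c t4 by simp
  show "r (insert x ((Fk 4 - {fs!c} - {x}) \<union> {fs!c, b})) = r ((Fk 4 - {fs!c} - {x}) \<union> {fs!c, b})"
    by (rule clmono[OF mat _ _ _ h]) (use F4E aE b x in auto)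
qed

lemma J5: assumes c: "c < 3" and ntA: "\<not> in_triangle M (fs!c)" and t5: "5 \<le> t"
  and HC: "3 \<le> card X" "3 \<le> card (E - {fs!c, fs!4} - X)"
  shows "\<not> sep2 {fs!c, fs!4} X"
proof -
  define a b where "a = fs!c" "b = fs!4"
  have aE: "a \<in> E" "b \<in> E" unfolding a_b_def using fE c t5 by auto
  have ab: "a \<noteq> b" unfolding a_b_def using fne c t5 by simp
  have F4E: "Fk 4 \<subseteq> E" using Fk_sub t4 by simp
  have bF4: "b \<notin> Fk 4" unfolding a_b_def using Fk_mem[of 4 4] t5 by simp
  have tcA: "\<forall>X. X \<subseteq> E - {a} \<longrightarrow> 2 \<le> card X \<longrightarrow> 2 \<le> card (E - {a} - X) \<longrightarrow>
               r E + 1 + 2 \<le> r (X \<union> {a}) + r (E - X)" using tcA_of[OF c ntA] unfolding a_b_def .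
  have fi: "fs!0 \<in> E" "fs!1 \<in> E" "fs!2 \<in> E" "fs!3 \<in> E" "fs!4 \<in> E"
    by (rule fE, use t5 in linarith)+
  have F4: "Fk 4 = {fs!0, fs!1, fs!2, fs!3}" by (rule F4eq)
  show ?thesis unfolding a_b_def[symmetric]
  proof (rule onemove[of "{a,b}" "Fk 4 - {a}"])
    show "{a, b} \<subseteq> E" using aE by simp
    show "Fk 4 - {a} \<subseteq> E - {a, b}" using F4E bF4 by auto
    show "card (Fk 4 - {a}) = 3" using P4(2)[OF c ntA] unfolding a_b_def .
    show "\<forall>x\<in>Fk 4 - {a}. r (insert x ((Fk 4 - {a} - {x}) \<union> {a, b})) = r ((Fk 4 - {a} - {x}) \<union> {a, b})"
      using HClab[OF c ntA aE(2)] unfolding a_b_def .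
    show "3 \<le> card X" using HC(1) .
    show "3 \<le> card (E - {a, b} - X)" using HC(2) unfolding a_b_def .
    show "\<forall>Z. sep2 {a, b} Z \<longrightarrow> Z \<inter> (Fk 4 - {a}) = {} \<longrightarrow> False"
    proof (intro allI impI)
      fix Z assume Z: "sep2 {a, b} Z" "Z \<inter> (Fk 4 - {a}) = {}"
      have Zs: "Z \<subseteq> E - {a,b}" using Z unfolding sep2_def by auto
      show False
      proof (cases "c = 2")
        case True
        have D: "{fs!0, fs!1, fs!3, fs!4} \<subseteq> E" using fi by auto
        have d: "a \<noteq> fs!0" "a \<noteq> fs!1" "a \<noteq> fs!3" unfolding a_b_def True
          by (rule fne, use t5 in linarith, use t5 in linarith, simp)+
        have "Z \<inter> {fs!0, fs!1, fs!3, fs!4} = {}" using Z(2) Zs d F4 unfolding a_b_def by auto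
        moreover have "a \<notin> {fs!0, fs!1, fs!3, fs!4}" using d unfolding a_b_def using True fne[of 2 4] t5 by auto
        ultimately show False
          using final_ab[OF Z(1) aE ab tcA D, of] spec[OF t5] unfolding a_b_def by auto
      next
        case False
        have T3: "triad M {fs!2, fs!3, fs!4}" using tri[of 2] t5 by simp
        have d: "a \<noteq> fs!2" "a \<noteq> fs!3" "a \<noteq> fs!4" unfolding a_b_def using False c fne t5 by auto
        have "Z \<inter> {fs!2, fs!3, fs!4} = {}" using Z(2) Zs d F4 unfolding a_b_def by auto
        moreover have "r (insert (fs!4) (E - {fs!2, fs!3, fs!4})) \<noteq> r (E - {fs!2, fs!3, fs!4})"
          using triad_D[OF T3] by simp
        ultimately show False
          using final_ab[OF Z(1) aE ab tcA triadE(1)[OF T3]] d unfolding a_b_def by auto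
      qed
    qed
  qed
qed


lemma corank_stepK: assumes c: "c < 3" and k: "even k" "4 \<le> k" "k < t"
  shows "r (E - (Fk k - {fs!c})) \<noteq> r (E - insert (fs!k) (Fk k - {fs!c}))"
proof -
  have GE: "Fk k - {fs!c} \<subseteq> E" using Fk_sub[of k] k by auto
  have gE: "fs!k \<in> E" using fE k by simp
  have gG: "fs!k \<notin> Fk k - {fs!c}" using Fk_mem[of k k] k by simp
  show ?thesis
  proof (cases "k = 4 \<and> c = 2")
    case True
    have t5: "5 \<le> t" using True k by simp
    have fi: "fs!0 \<in> E" "fs!1 \<in> E" "fs!3 \<in> E" "fs!4 \<in> E" by (rule fE, use t5 in linarith)+
    have d: "fs!2 \<noteq> fs!0" "fs!2 \<noteq> fs!1" "fs!2 \<noteq> fs!3"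
      by (rule fne, use t5 in linarith, use t5 in linarith, simp)+
    show ?thesis
    proof (rule stepD_from[OF GE gE gG, of "{fs!0, fs!1, fs!3, fs!4}"])
      show "{fs!0, fs!1, fs!3, fs!4} \<subseteq> insert (fs!k) (Fk k - {fs!c})"
        using True F4eq d by auto
      show "{fs!0, fs!1, fs!3, fs!4} \<subseteq> E" using fi by auto
      show "r (insert (fs!k) (E - {fs!0, fs!1, fs!3, fs!4})) \<noteq> r (E - {fs!0, fs!1, fs!3, fs!4})"
        using spec[OF t5] True by simp
    qed
  next
    case False
    have ev: "even (k - 2)" "k - 2 + 2 < t" using k by auto
    have T0: "triad M {fs ! (k-2), fs ! (k-2+1), fs ! (k-2+2)}" by (rule tri[OF ev])
    have e1: "k - 2 + 1 = k - 1" "k - 2 + 2 = k" using k by auto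
    have T: "triad M {fs ! (k-2), fs ! (k-1), fs!k}" using T0 unfolding e1 .
    have n1: "k - 2 \<noteq> c" "k - 1 \<noteq> c" using False k c by auto
    have d: "fs!(k-2) \<noteq> fs!c" "fs!(k-1) \<noteq> fs!c" using fne n1 k c by auto
    have m: "fs!(k-2) \<in> Fk k" "fs!(k-1) \<in> Fk k" using Fk_mem k by auto
    show ?thesis
    proof (rule stepD_from[OF GE gE gG _ triadE(1)[OF T] triad_D[OF T]])
      show "{fs ! (k-2), fs ! (k-1), fs!k} \<subseteq> insert (fs!k) (Fk k - {fs!c})" using d m by auto
    qed simp
  qed
qed

lemma half7: assumes c: "c < 3" and ntA: "\<not> in_triangle M (fs!c)"
  and n: "even n" "6 \<le> n" "n < t" and ntB: "\<not> in_triangle M (fs!n)"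
  and s: "sep2 {fs!c, fs!n} X" and pq: "p \<in> Fk 4 - {fs!c}" "q \<in> Fk 4 - {fs!c}" "p \<noteq> q" "p \<in> X" "q \<in> X"
  shows False
proof -
  define a b where "a = fs!c" "b = fs!n"
  define P where "P = Fk 4 - {a}"
  have aE: "a \<in> E" "b \<in> E" unfolding a_b_def using fE c n t4 by auto
  have ab: "a \<noteq> b" unfolding a_b_def using fne c n by simp
  have K: "{a,b} \<subseteq> E" using aE by simp
  have F4E: "Fk 4 \<subseteq> E" using Fk_sub t4 by simp
  have finF4: "finite (Fk 4)" using F4E finE finite_subset by blast
  have bF4: "b \<notin> Fk 4" unfolding a_b_def using Fk_mem[of n 4] n by simp
  have aF4: "a \<in> Fk 4" unfolding a_b_def using Fk_mem[of c 4] c t4 by simp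
  have cP: "card P = 3" unfolding P_def a_b_def using P4(2)[OF c ntA] .
  have pqP: "p \<in> P" "q \<in> P" using pq unfolding P_def a_b_def by auto
  have "card (P - {p,q}) = 1" using cP pqP pq(3) finF4 unfolding P_def by (simp add: card_Diff_subset)
  then obtain s0 where s0: "P - {p,q} = {s0}" by (auto simp: card_Suc_eq)
  have PP: "P = {p,q,s0}" using s0 pqP by auto
  have tcA: "\<forall>X. X \<subseteq> E - {a} \<longrightarrow> 2 \<le> card X \<longrightarrow> 2 \<le> card (E - {a} - X) \<longrightarrow>
               r E + 1 + 2 \<le> r (X \<union> {a}) + r (E - X)" using tcA_of[OF c ntA] unfolding a_b_def .
  define g where "g = (\<lambda>l. if l = 0 then p else if l = 1 then q else if l = 2 then s0 else fs!(l+1))"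
  have u3: "{..<3::nat} = {0,1,2}" by (simp add: lessThan_Suc numeral_eq_Suc insert_commute)
  have g3: "g ` {..<3} = P" unfolding u3 g_def PP by (simp add: insert_commute)
  have gimg: "\<And>l. 3 \<le> l \<Longrightarrow> l + 1 \<le> n \<Longrightarrow> g ` {..<l} = Fk (l+1) - {a}"
  proof -
    fix l :: nat assume l: "3 \<le> l" and ln: "l + 1 \<le> n"
    have u: "{..<l} = {..<3} \<union> {3..<l}" using l by auto
    have u4: "{..<l+1} = {..<4} \<union> {4..<l+1}" using l by auto
    have "g ` {3..<l} = (\<lambda>i. fs!(i+1)) ` {3..<l}" unfolding g_def by (intro image_cong) auto
    also have "\<dots> = (!) fs ` {4..<l+1}"
    proof -
      have "(!) fs ` (Suc ` {3..<l}) = (\<lambda>i. fs!(i+1)) ` {3..<l}" by (simp only: image_image) simp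
      moreover have "Suc ` {3..<l} = {4..<l+1}" by (simp add: numeral_eq_Suc)
      ultimately show ?thesis by simp
    qed
    finally have g4: "g ` {3..<l} = (!) fs ` {4..<l+1}" .
    have Fl: "Fk (l+1) = Fk 4 \<union> (!) fs ` {4..<l+1}" unfolding Fk_def u4 image_Un ..
    have "a \<notin> (!) fs ` {4..<l+1}"
    proof
      assume "a \<in> (!) fs ` {4..<l+1}"
      then obtain i where i: "4 \<le> i" "i < l + 1" "a = fs!i" by auto
      have "fs!i \<noteq> fs!c" using fne[of i c] i ln n c by simp
      then show False using i unfolding a_b_def by simp
    qed
    then have "Fk (l+1) - {a} = P \<union> (!) fs ` {4..<l+1}" unfolding Fl P_def by auto
    then show "g ` {..<l} = Fk (l+1) - {a}" unfolding u image_Un g3 g4 by simp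
  qed
  have X: "X \<subseteq> E - {a,b}" "lamok {a,b} X" "2 \<le> card (E - {a,b} - X)" "2 \<le> card X"
    using s unfolding sep2_def a_b_def by auto
  have PE: "P \<subseteq> E - {a,b}" unfolding P_def using F4E bF4 by auto
  have gE: "\<forall>l<n-1. g l \<in> E - {a,b}"
  proof (intro allI impI)
    fix l assume l: "l < n - 1"
    show "g l \<in> E - {a,b}"
    proof (cases "l < 3")
      case True
      then have "g l \<in> P" using g3 by auto
      then show ?thesis using PE by auto
    next
      case False
      then have gl: "g l = fs!(l+1)" unfolding g_def by auto
      have "fs!(l+1) \<noteq> a" "fs!(l+1) \<noteq> b" unfolding a_b_def using fne[of "l+1" c] fne[of "l+1" n] l n c False by auto
      then show ?thesis using gl fE[of "l+1"] l n by auto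
    qed
  qed
  have st: "\<forall>l<n-1. g l \<in> X \<or> r (insert (g l) (g ` {..<l} \<union> {a,b})) = r (g ` {..<l} \<union> {a,b})
                    \<or> r (E - g ` {..<l}) \<noteq> r (E - insert (g l) (g ` {..<l}))"
  proof (intro allI impI)
    fix l assume l: "l < n - 1"
    consider "l = 0" | "l = 1" | "l = 2" | "3 \<le> l" by linarith
    then show "g l \<in> X \<or> r (insert (g l) (g ` {..<l} \<union> {a,b})) = r (g ` {..<l} \<union> {a,b})
                    \<or> r (E - g ` {..<l}) \<noteq> r (E - insert (g l) (g ` {..<l}))"
    proof cases
      case 1 then show ?thesis using pq unfolding g_def by simp
    next
      case 2 then show ?thesis using pq unfolding g_def by simp
    next
      case 3
      have u2: "{..<2::nat} = {0,1}" by (simp add: lessThan_Suc numeral_eq_Suc insert_commute)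
      have g2: "g ` {..<2} = {p,q}" unfolding u2 g_def by (simp add: insert_commute)
      have Ps: "P - {s0} = {p,q}" using s0 PP by auto
      have s0P: "s0 \<in> P" using PP by simp
      have "r (insert s0 ((P - {s0}) \<union> {a, b})) = r ((P - {s0}) \<union> {a, b})"
        using HClab[OF c ntA aE(2)] s0P unfolding P_def a_b_def by blast
      then show ?thesis using 3 g2 Ps unfolding g_def by simp
    next
      case 4
      define k where "k = l + 1"
      have gl: "g l = fs!k" using 4 unfolding g_def k_def by auto
      have gi: "g ` {..<l} = Fk k - {a}" using gimg 4 l unfolding k_def by simp
      have kt: "k < t" "4 \<le> k" using l n 4 unfolding k_def by auto
      show ?thesis
      proof (cases "odd k")
        case True
        have h: "r (insert (fs!k) (Fk k)) = r (Fk k)" using clo[OF True _ kt(1)] kt by simp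
        have aFk: "a \<in> Fk k" unfolding a_b_def using Fk_mem[of c k] c kt by simp
        have "r (insert (fs!k) ((Fk k - {a}) \<union> {a,b})) = r ((Fk k - {a}) \<union> {a,b})"
          by (rule clmono[OF mat _ _ _ h]) (use aFk Fk_sub[of k] kt aE fE[of k] in auto)
        then show ?thesis using gl gi by simp
      next
        case False
        then have "r (E - (Fk k - {a})) \<noteq> r (E - insert (fs!k) (Fk k - {a}))"
          using corank_stepK[OF c _ kt(2) kt(1)] unfolding a_b_def by simp
        then show ?thesis using gl gi by simp
      qed
    qed
  qed
  obtain X' where X': "X \<subseteq> X'" "X' \<subseteq> E - {a,b}" "lamok {a,b} X'" "2 \<le> card (E - {a,b} - X')"
      "card (E - {a,b} - X') = 2 \<or> g ` {..<n-1} \<subseteq> X'"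
    using absorb[OF K X(1) X(2) X(3) gE st] by blast
  have finX': "finite X'" using X' finE finite_subset by blast
  have "card X \<le> card X'" by (rule card_mono[OF finX' X'(1)])
  then have s': "sep2 {a,b} X'" unfolding sep2_def using X' X by simp
  have sY: "sep2 {a,b} (E - {a,b} - X')" by (rule sep2_sym[OF K s'])
  show False
  proof (cases "card (E - {a,b} - X') = 2")
    case True
    then obtain y1 y2 where yy: "E - {a,b} - X' = {y1,y2}" "y1 \<noteq> y2" by (meson card_2_iff)
    have "r ((E - {a,b} - X') \<union> {a,b}) \<le> 3" by (rule sep2ab_card2[OF aE ab sY True])
    then have "r ({y1,y2} \<union> {fs!c, fs!n}) \<le> 3" using yy unfolding a_b_def by simp
    moreover have "y1 \<in> E - {fs!c, fs!n}" "y2 \<in> E - {fs!c, fs!n}" using yy unfolding a_b_def by auto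
    ultimately show False using npar7[OF c ntA n ntB] yy by blast
  next
    case False
    then have "g ` {..<n-1} \<subseteq> X'" using X'(5) by simp
    moreover have "g ` {..<n-1} = Fk n - {a}" using gimg[of "n-1"] n by simp
    ultimately have FX: "Fk n - {a} \<subseteq> X'" by simp
    have ev: "even (n - 2)" "n - 2 + 2 < t" using n by auto
    have T0: "triad M {fs ! (n-2), fs ! (n-2+1), fs ! (n-2+2)}" by (rule tri[OF ev])
    have e1: "n - 2 + 1 = n - 1" "n - 2 + 2 = n" using n by auto
    have T: "triad M {fs ! (n-2), fs ! (n-1), b}" using T0 unfolding e1 a_b_def .
    have d: "fs!(n-2) \<noteq> a" "fs!(n-1) \<noteq> a" unfolding a_b_def using fne n c by auto
    have m: "fs!(n-2) \<in> Fk n" "fs!(n-1) \<in> Fk n" using Fk_mem n by auto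
    have "(E - {a,b} - X') \<inter> {fs ! (n-2), fs ! (n-1), b} = {}" using FX d m by auto
    moreover have "a \<notin> {fs ! (n-2), fs ! (n-1), b}" using d ab by auto
    ultimately show False
      using final_ab[OF sY aE ab tcA triadE(1)[OF T] _ _ _ triad_D[OF T]] by simp
  qed
qed


lemma J7: assumes c: "c < 3" and ntA: "\<not> in_triangle M (fs!c)"
  and n: "even n" "6 \<le> n" "n < t" and ntB: "\<not> in_triangle M (fs!n)"
  shows "\<not> sep2 {fs!c, fs!n} X"
proof (rule pigeon[of _ "Fk 4 - {fs!c}"])
  have aE: "fs!c \<in> E" "fs!n \<in> E" using fE c n t4 by auto
  show "{fs!c, fs!n} \<subseteq> E" using aE by simp
  have F4E: "Fk 4 \<subseteq> E" using Fk_sub t4 by simp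
  have bF4: "fs!n \<notin> Fk 4" using Fk_mem[of n 4] n by simp
  show "Fk 4 - {fs!c} \<subseteq> E - {fs!c, fs!n}" using F4E bF4 by auto
  show "card (Fk 4 - {fs!c}) = 3" using P4(2)[OF c ntA] .
  show "\<forall>X. sep2 {fs!c, fs!n} X \<longrightarrow> 2 \<le> card ((Fk 4 - {fs!c}) \<inter> X) \<longrightarrow> False"
  proof (intro allI impI)
    fix X assume s: "sep2 {fs!c, fs!n} X" and cc: "2 \<le> card ((Fk 4 - {fs!c}) \<inter> X)"
    obtain p q where "p \<in> (Fk 4 - {fs!c}) \<inter> X" "q \<in> (Fk 4 - {fs!c}) \<inter> X" "p \<noteq> q"
      using two_elems[OF cc] by blast
    then show False using half7[OF c ntA n ntB s, of p q] by auto
  qed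
qed

lemma par_trans: assumes mN: "matroid N" and nl: "\<forall>x\<in>gnd N. rk N {x} = 1"
  and "parallel N x y" "parallel N y z" shows "parallel N x z"
proof -
  have xyz: "x \<in> gnd N" "y \<in> gnd N" "z \<in> gnd N" "rk N {x,y} = 1" "rk N {y,z} = 1"
    using assms(3,4) unfolding parallel_def by auto
  have "rk N ({x,y} \<union> {y,z}) + rk N ({x,y} \<inter> {y,z}) \<le> rk N {x,y} + rk N {y,z}"
    by (rule mat_sub[OF mN]) (use xyz in auto)
  moreover have "rk N {y} \<le> rk N ({x,y} \<inter> {y,z})" by (rule mat_mono[OF mN]) (use xyz in auto)
  moreover have "rk N {x,z} \<le> rk N ({x,y} \<union> {y,z})" by (rule mat_mono[OF mN]) (use xyz in auto)
  moreover have "rk N {x} \<le> rk N {x,z}" by (rule mat_mono[OF mN]) (use xyz in auto)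
  ultimately have "rk N {x,z} = 1" using xyz nl by auto
  then show ?thesis using assms(3,4) unfolding parallel_def by auto
qed

lemma par_sym: "parallel N x y \<Longrightarrow> parallel N y x" unfolding parallel_def by (auto simp: insert_commute)

lemma par_refl: assumes "\<forall>x\<in>gnd N. rk N {x} = 1" "x \<in> gnd N" shows "parallel N x x"
  using assms unfolding parallel_def loop_def by auto

lemma par_cl: assumes mN: "matroid N" and nl: "\<forall>x\<in>gnd N. rk N {x} = 1"
  and A: "A \<subseteq> gnd N" "s \<in> A" and p: "parallel N z s" shows "rk N (insert z A) = rk N A"
proof -
  have zs: "z \<in> gnd N" "s \<in> gnd N" "rk N {z,s} = 1" using p unfolding parallel_def by auto
  have "rk N (A \<union> {z,s}) + rk N (A \<inter> {z,s}) \<le> rk N A + rk N {z,s}"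
    by (rule mat_sub[OF mN]) (use A zs in auto)
  moreover have "rk N {s} \<le> rk N (A \<inter> {z,s})" by (rule mat_mono[OF mN]) (use A zs in auto)
  moreover have "A \<union> {z,s} = insert z A" using A by auto
  moreover have "rk N A \<le> rk N (insert z A)" by (rule mat_mono[OF mN]) (use A zs in auto)
  ultimately show ?thesis using zs nl by auto
qed

lemma si_tc: assumes mN: "matroid N" and nl: "\<forall>x\<in>gnd N. rk N {x} = 1"
  and H1: "\<forall>X. X \<subseteq> gnd N \<longrightarrow> X \<noteq> {} \<longrightarrow> gnd N - X \<noteq> {} \<longrightarrow> rk N (gnd N) + 1 \<le> rk N X + rk N (gnd N - X)"
  and H2: "\<forall>X. X \<subseteq> gnd N \<longrightarrow> 2 \<le> rk N X \<longrightarrow> 2 \<le> rk N (gnd N - X) \<longrightarrow> rk N (gnd N) + 2 \<le> rk N X + rk N (gnd N - X)"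
  shows "three_connected (si N)"
proof -
  define G where "G = gnd N"
  define PS where "PS = (\<lambda>S. S \<subseteq> {e \<in> gnd N. \<not> loop N e} \<and>
      (\<forall>e \<in> gnd N. \<not> loop N e \<longrightarrow> (\<exists>!s \<in> S. parallel N e s)))"
  have nlp: "\<And>e. e \<in> G \<Longrightarrow> \<not> loop N e" using nl unfolding loop_def G_def by auto
  define rep where "rep = (\<lambda>x. SOME s. parallel N x s)"
  have rep1: "\<And>x. x \<in> G \<Longrightarrow> parallel N x (rep x)"
  proof -
    fix x assume "x \<in> G"
    then have "parallel N x x" using par_refl[OF nl] unfolding G_def by blast
    then show "parallel N x (rep x)" unfolding rep_def by (rule someI)
  qed
  have repeq: "\<And>x y. parallel N x y \<Longrightarrow> rep x = rep y"
  proof -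
    fix x y assume p: "parallel N x y"
    have "\<And>s. parallel N x s \<longleftrightarrow> parallel N y s"
    proof
      fix s assume "parallel N x s"
      then show "parallel N y s" using par_trans[OF mN nl par_sym[OF p]] by blast
    next
      fix s assume "parallel N y s"
      then show "parallel N x s" using par_trans[OF mN nl p] by blast
    qed
    then have "parallel N x = parallel N y" by (rule ext)
    then show "rep x = rep y" unfolding rep_def by simp
  qed
  have "PS (rep ` G)"
    unfolding PS_def
  proof (intro conjI ballI impI)
    show "rep ` G \<subseteq> {e \<in> gnd N. \<not> loop N e}"
    proof
      fix s assume "s \<in> rep ` G"
      then obtain x where x: "x \<in> G" "s = rep x" by auto
      then have "parallel N x s" using rep1 by simp
      then have "s \<in> G" unfolding parallel_def G_def by simp
      then show "s \<in> {e \<in> gnd N. \<not> loop N e}" using nlp unfolding G_def by auto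
    qed
    fix e assume e: "e \<in> gnd N" "\<not> loop N e"
    show "\<exists>!s\<in>rep ` G. parallel N e s"
    proof (rule ex1I[of _ "rep e"])
      show "rep e \<in> rep ` G \<and> parallel N e (rep e)" using e rep1 unfolding G_def by auto
      fix s assume s: "s \<in> rep ` G \<and> parallel N e s"
      then obtain x where x: "x \<in> G" "s = rep x" by auto
      have "parallel N x s" using rep1 x by simp
      then have "parallel N e x" using s par_trans[OF mN nl, of e s x] par_sym[of N x s] by blast
      then have "rep e = rep x" by (rule repeq)
      then show "s = rep e" using x by simp
    qed
  qed
  then have PS1: "PS (SOME S. PS S)" by (rule someI)
  define S where "S = (SOME S. PS S)"
  have siN: "si N = (S, rk N)" unfolding si_def restrict_def S_def PS_def by simp
  have SG: "S \<subseteq> G" using PS1 unfolding S_def PS_def G_def by auto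
  have PS1': "\<forall>e \<in> gnd N. \<not> loop N e \<longrightarrow> (\<exists>!s \<in> S. parallel N e s)"
    using PS1 unfolding S_def PS_def by blast
  have ex1: "\<And>e. e \<in> G \<Longrightarrow> \<exists>!s \<in> S. parallel N e s" using PS1' nlp unfolding G_def by blast
  have ex: "\<And>e. e \<in> G \<Longrightarrow> \<exists>s\<in>S. parallel N e s"
  proof -
    fix e assume "e \<in> G"
    from ex1[OF this] obtain s where "s \<in> S \<and> parallel N e s" by blast
    then show "\<exists>s\<in>S. parallel N e s" by blast
  qed
  have un: "\<And>e s s'. e \<in> G \<Longrightarrow> s \<in> S \<Longrightarrow> s' \<in> S \<Longrightarrow> parallel N e s \<Longrightarrow> parallel N e s' \<Longrightarrow> s = s'"
  proof -
    fix e s s' assume h: "e \<in> G" "s \<in> S" "s' \<in> S" "parallel N e s" "parallel N e s'"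
    from ex1[OF h(1)] obtain s0 where "s0 \<in> S \<and> parallel N e s0" "\<forall>y. y \<in> S \<and> parallel N e y \<longrightarrow> y = s0"
      by blast
    then show "s = s'" using h by blast
  qed
  have clos: "\<And>A Z. A \<subseteq> G \<Longrightarrow> Z \<subseteq> G \<Longrightarrow> (\<forall>z\<in>Z. \<exists>s\<in>A. parallel N z s) \<Longrightarrow> rk N (A \<union> Z) = rk N A"
  proof -
    fix A Z assume AZ: "A \<subseteq> G" "Z \<subseteq> G" "\<forall>z\<in>Z. \<exists>s\<in>A. parallel N z s"
    have AN: "A \<subseteq> gnd N" "Z \<subseteq> gnd N" using AZ unfolding G_def by auto
    have "\<forall>z\<in>Z. rk N (insert z A) = rk N A"
    proof
      fix z assume "z \<in> Z"
      then obtain s where s: "s \<in> A" "parallel N z s" using AZ(3) by blast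
      show "rk N (insert z A) = rk N A" by (rule par_cl[OF mN nl AN(1) s])
    qed
    then show "rk N (A \<union> Z) = rk N A" by (rule cl_union[OF mN AN])
  qed
  have nonpar: "\<And>A. A \<subseteq> S \<Longrightarrow> 2 \<le> card A \<Longrightarrow> 2 \<le> rk N A"
  proof -
    fix A assume A: "A \<subseteq> S" "2 \<le> card A"
    obtain s1 s2 where s: "s1 \<in> A" "s2 \<in> A" "s1 \<noteq> s2" using two_elems[OF A(2)] by blast
    have sS: "s1 \<in> S" "s2 \<in> S" using s A by auto
    have sG: "s1 \<in> G" "s2 \<in> G" using sS SG by auto
    have sN: "s1 \<in> gnd N" "s2 \<in> gnd N" using sG unfolding G_def by auto
    have p11: "parallel N s1 s1" by (rule par_refl[OF nl sN(1)])
    have np: "\<not> parallel N s1 s2"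
    proof
      assume "parallel N s1 s2"
      then have "s1 = s2" using un[OF sG(1) sS(1) sS(2) p11] by blast
      then show False using s by simp
    qed
    have "rk N {s1,s2} \<noteq> 1"
    proof
      assume h: "rk N {s1,s2} = 1"
      have "\<not> loop N s1" "\<not> loop N s2" using nlp sG by auto
      then have "parallel N s1 s2" unfolding parallel_def using sN h by simp
      then show False using np by simp
    qed
    moreover have "rk N {s1} \<le> rk N {s1,s2}" by (rule mat_mono[OF mN]) (use sN in auto)
    moreover have "rk N {s1,s2} \<le> rk N A" by (rule mat_mono[OF mN]) (use s A SG G_def in auto)
    moreover have "rk N {s1} = 1" using nl sN by simp
    ultimately show "2 \<le> rk N A" by linarith
  qed
  show ?thesis unfolding siN three_connected_def
  proof (intro allI impI notI)
    fix k X assume k: "k < (3::nat)" and sep: "separation (S, rk N) k X"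
    have X: "X \<subseteq> S" "k \<le> card X" "k \<le> card (S - X)" "rk N X + rk N (S - X) - rk N S < k"
      using sep unfolding separation_def conn_def by auto
    define Xb where "Xb = {z \<in> G. \<exists>s\<in>X. parallel N z s}"
    define Yb where "Yb = G - Xb"
    have XXb: "X \<subseteq> Xb" unfolding Xb_def using X SG par_refl[OF nl] unfolding G_def by auto
    have SXY: "S - X \<subseteq> Yb"
    proof
      fix s' assume s': "s' \<in> S - X"
      show "s' \<in> Yb"
      proof (rule ccontr)
        assume "s' \<notin> Yb"
        then obtain s where "s \<in> X" "parallel N s' s" using s' SG unfolding Yb_def Xb_def by auto
        moreover have "parallel N s' s'" using par_refl[OF nl] s' SG unfolding G_def by auto
        ultimately have "s = s'" using un[of s' s s'] s' X SG by auto
        then show False using s' \<open>s \<in> X\<close> by simp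
      qed
    qed
    have XbG: "Xb \<subseteq> G" "Yb \<subseteq> G" unfolding Xb_def Yb_def by auto
    have rX: "rk N Xb = rk N X"
    proof -
      have "rk N (X \<union> Xb) = rk N X" by (rule clos) (use X SG XbG in \<open>auto simp: Xb_def\<close>)
      then show ?thesis using XXb by (simp add: Un_absorb1)
    qed
    have rY: "rk N Yb = rk N (S - X)"
    proof -
      have "\<forall>z\<in>Yb. \<exists>s\<in>S - X. parallel N z s"
      proof
        fix z assume z: "z \<in> Yb"
        then obtain s where s: "s \<in> S" "parallel N z s" using ex XbG by blast
        have "s \<notin> X" using z s unfolding Yb_def Xb_def by auto
        then show "\<exists>s\<in>S - X. parallel N z s" using s by auto
      qed
      then have "rk N ((S - X) \<union> Yb) = rk N (S - X)" by (intro clos) (use SG XbG in auto)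
      then show ?thesis using SXY by (simp add: Un_absorb1)
    qed
    have rG: "rk N G = rk N S"
    proof -
      have "rk N (S \<union> G) = rk N S" by (rule clos) (use SG ex in auto)
      then show ?thesis using SG by (simp add: Un_absorb1)
    qed
    have GX: "G - Xb = Yb" unfolding Yb_def ..
    have cc: "rk N Xb + rk N (G - Xb) - rk N G < k" using X(4) rX rY rG GX by simp
    have "k = 0 \<or> k = 1 \<or> k = 2" using k by linarith
    then show False
    proof (elim disjE)
      assume "k = 0" then show False using cc by simp
    next
      assume k1: "k = 1"
      have "card X \<noteq> 0" using X k1 by simp
      then have "X \<noteq> {}" by (metis card.empty)
      then have "Xb \<noteq> {}" using XXb by auto
      moreover have "card (S - X) \<noteq> 0" using X k1 by simp
      then have "S - X \<noteq> {}" by (metis card.empty)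
      then have "G - Xb \<noteq> {}" using SXY GX by auto
      ultimately have "rk N G + 1 \<le> rk N Xb + rk N (G - Xb)" using H1 XbG unfolding G_def by blast
      then show False using cc k1 by linarith
    next
      assume k2: "k = 2"
      have "2 \<le> rk N X" using nonpar X k2 by simp
      moreover have "2 \<le> rk N (S - X)" using nonpar X k2 by auto
      ultimately have "2 \<le> rk N Xb" "2 \<le> rk N (G - Xb)" using rX rY GX by auto
      then have "rk N G + 2 \<le> rk N Xb + rk N (G - Xb)" using H2 XbG unfolding G_def by blast
      then show False using cc k2 by linarith
    qed
  qed
qed


lemma matroid_contract: assumes mM: "matroid M'" and e: "e \<in> gnd M'" shows "matroid (contract M' e)"
proof -
  have fin: "finite (gnd M' - {e})" using mat_fin[OF mM] by simp
  have A: "\<forall>X. X \<subseteq> gnd M' - {e} \<longrightarrow> rk M' (X \<union> {e}) - rk M' {e} \<le> card X"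
  proof (intro allI impI)
    fix X assume X: "X \<subseteq> gnd M' - {e}"
    have "rk M' (X \<union> {e}) + rk M' (X \<inter> {e}) \<le> rk M' X + rk M' {e}" by (rule mat_sub[OF mM]) (use X e in auto)
    moreover have "X \<inter> {e} = {}" using X by auto
    moreover have "rk M' X \<le> card X" by (rule mat_card[OF mM]) (use X in auto)
    ultimately show "rk M' (X \<union> {e}) - rk M' {e} \<le> card X" using mat_empty[OF mM] by simp
  qed
  have B: "\<forall>X Y. X \<subseteq> Y \<and> Y \<subseteq> gnd M' - {e} \<longrightarrow> rk M' (X \<union> {e}) - rk M' {e} \<le> rk M' (Y \<union> {e}) - rk M' {e}"
  proof (intro allI impI)
    fix X Y assume XY: "X \<subseteq> Y \<and> Y \<subseteq> gnd M' - {e}"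
    have "rk M' (X \<union> {e}) \<le> rk M' (Y \<union> {e})" by (rule mat_mono[OF mM]) (use XY e in auto)
    then show "rk M' (X \<union> {e}) - rk M' {e} \<le> rk M' (Y \<union> {e}) - rk M' {e}" by simp
  qed
  have C: "\<forall>X Y. X \<subseteq> gnd M' - {e} \<and> Y \<subseteq> gnd M' - {e} \<longrightarrow>
     (rk M' ((X \<union> Y) \<union> {e}) - rk M' {e}) + (rk M' ((X \<inter> Y) \<union> {e}) - rk M' {e})
        \<le> (rk M' (X \<union> {e}) - rk M' {e}) + (rk M' (Y \<union> {e}) - rk M' {e})"
  proof (intro allI impI)
    fix X Y assume XY: "X \<subseteq> gnd M' - {e} \<and> Y \<subseteq> gnd M' - {e}"
    have "rk M' ((X \<union> {e}) \<union> (Y \<union> {e})) + rk M' ((X \<union> {e}) \<inter> (Y \<union> {e})) \<le> rk M' (X \<union> {e}) + rk M' (Y \<union> {e})"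
      by (rule mat_sub[OF mM]) (use XY e in auto)
    moreover have "(X \<union> {e}) \<union> (Y \<union> {e}) = (X \<union> Y) \<union> {e}" "(X \<union> {e}) \<inter> (Y \<union> {e}) = (X \<inter> Y) \<union> {e}" by auto
    moreover have "rk M' {e} \<le> rk M' ((X \<inter> Y) \<union> {e})" by (rule mat_mono[OF mM]) (use XY e in auto)
    moreover have "rk M' {e} \<le> rk M' ((X \<union> Y) \<union> {e})" by (rule mat_mono[OF mM]) (use XY e in auto)
    ultimately show "(rk M' ((X \<union> Y) \<union> {e}) - rk M' {e}) + (rk M' ((X \<inter> Y) \<union> {e}) - rk M' {e})
        \<le> (rk M' (X \<union> {e}) - rk M' {e}) + (rk M' (Y \<union> {e}) - rk M' {e})" by simp
  qed
  show ?thesis unfolding matroid_def contract_def gnd_pair rk_pair using fin A B C by blast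
qed

lemma N_facts: assumes ab: "a \<in> E" "b \<in> E" "a \<noteq> b"
  shows "gnd (contract (contract M a) b) = E - {a,b}"
    "\<And>X. X \<subseteq> E - {a,b} \<Longrightarrow> rk (contract (contract M a) b) X + 2 = r (X \<union> {a,b})"
    "matroid (contract (contract M a) b)"
proof -
  show "gnd (contract (contract M a) b) = E - {a,b}" by (auto simp: contract_def)
  fix X assume X: "X \<subseteq> E - {a,b}"
  have e: "X \<union> {b} \<union> {a} = X \<union> {a, b}" "{b} \<union> {a} = {a, b}" by auto
  have "r {a} \<le> r {a,b}" by (rule mono) (use ab in auto)
  moreover have "r {a,b} \<le> r (X \<union> {a,b})" by (rule mono) (use ab X in auto)
  moreover have "r {a,b} = 2" using r2 ab by simp
  moreover have "r {a} = 1" using r1 ab by simp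
  ultimately show "rk (contract (contract M a) b) X + 2 = r (X \<union> {a,b})"
    unfolding contract_def rk_pair e by simp
next
  have "matroid (contract M a)" by (rule matroid_contract[OF mat ab(1)])
  moreover have "b \<in> gnd (contract M a)" using ab by (simp add: contract_def)
  ultimately show "matroid (contract (contract M a) b)" by (rule matroid_contract)
qed

lemma N_tc7: assumes c: "c < 3" and ntA: "\<not> in_triangle M (fs!c)"
  and n: "even n" "6 \<le> n" "n < t" and ntB: "\<not> in_triangle M (fs!n)"
  shows "three_connected (contract (contract M (fs!c)) (fs!n))"
proof -
  have aE: "fs!c \<in> E" "fs!n \<in> E" using fE c n t4 by auto
  have ab: "fs!c \<noteq> fs!n" using fne c n by simp
  show ?thesis
  proof (rule contract2_tc[OF aE ab], rule tc_cK)
    show "{fs!c, fs!n} \<subseteq> E" using aE by simp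
    show "\<forall>X. X \<subseteq> E - {fs!c, fs!n} \<longrightarrow> X \<noteq> {} \<longrightarrow> E - {fs!c, fs!n} - X \<noteq> {} \<longrightarrow>
            r E + r {fs!c, fs!n} + 1 \<le> r (X \<union> {fs!c, fs!n}) + r (E - X)"
      by (rule H1ab[OF aE ab ntA tcA_of[OF c ntA]])
    show "\<forall>X. \<not> sep2 {fs!c, fs!n} X" using J7[OF c ntA n ntB] by blast
  qed
qed

lemma N_tc5: assumes c: "c < 3" and ntA: "\<not> in_triangle M (fs!c)"
  and t5: "t = 5" and ntB: "\<not> in_triangle M (fs!4)"
  shows "three_connected (contract (contract M (fs!c)) (fs!4))"
proof -
  have aE: "fs!c \<in> E" "fs!4 \<in> E" using fE c t5 by auto
  have ab: "fs!c \<noteq> fs!4" using fne c t5 by simp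
  have K: "{fs!c, fs!4} \<subseteq> E" using aE by simp
  have c3: "\<And>X. sep2 {fs!c, fs!4} X \<Longrightarrow> 3 \<le> card X"
  proof (rule ccontr)
    fix X assume s: "sep2 {fs!c, fs!4} X" and n3: "\<not> 3 \<le> card X"
    have X: "X \<subseteq> E - {fs!c, fs!4}" "2 \<le> card X" using s unfolding sep2_def by auto
    then have c2: "card X = 2" using n3 by simp
    then obtain y1 y2 where yy: "X = {y1,y2}" "y1 \<noteq> y2" by (meson card_2_iff)
    have "r (X \<union> {fs!c, fs!4}) \<le> 3" by (rule sep2ab_card2[OF aE ab s c2])
    then show False using npar5[OF c ntA t5 ntB, of y1 y2] yy X by auto
  qed
  show ?thesis
  proof (rule contract2_tc[OF aE ab], rule tc_cK[OF K])
    show "\<forall>X. X \<subseteq> E - {fs!c, fs!4} \<longrightarrow> X \<noteq> {} \<longrightarrow> E - {fs!c, fs!4} - X \<noteq> {} \<longrightarrow>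
            r E + r {fs!c, fs!4} + 1 \<le> r (X \<union> {fs!c, fs!4}) + r (E - X)"
      by (rule H1ab[OF aE ab ntA tcA_of[OF c ntA]])
    show "\<forall>X. \<not> sep2 {fs!c, fs!4} X"
    proof (intro allI notI)
      fix X assume s: "sep2 {fs!c, fs!4} X"
      have "\<not> sep2 {fs!c, fs!4} X"
        by (rule J5[OF c ntA _ c3[OF s] c3[OF sep2_sym[OF K s]]]) (use t5 in simp)
      then show False using s by simp
    qed
  qed
qed

lemma N_si: assumes c: "c < 3" and ntA: "\<not> in_triangle M (fs!c)"
  and n: "even n" "4 \<le> n" "n < t" and ntB: "\<not> in_triangle M (fs!n)"
  shows "three_connected (si (contract (contract M (fs!c)) (fs!n)))"
proof -
  define a b where "a = fs!c" "b = fs!n"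
  define N where "N = contract (contract M a) b"
  have aE: "a \<in> E" "b \<in> E" unfolding a_b_def using fE c n t4 by auto
  have ab: "a \<noteq> b" unfolding a_b_def using fne c n by simp
  have K: "{a,b} \<subseteq> E" using aE by simp
  have ntA': "\<not> in_triangle M a" using ntA unfolding a_b_def .
  note NF = N_facts[OF aE ab, folded N_def]
  have tcA: "\<forall>X. X \<subseteq> E - {a} \<longrightarrow> 2 \<le> card X \<longrightarrow> 2 \<le> card (E - {a} - X) \<longrightarrow>
               r E + 1 + 2 \<le> r (X \<union> {a}) + r (E - X)" using tcA_of[OF c ntA] unfolding a_b_def .
  have H1: "\<forall>X. X \<subseteq> E - {a,b} \<longrightarrow> X \<noteq> {} \<longrightarrow> E - {a,b} - X \<noteq> {} \<longrightarrow>
            r E + r {a,b} + 1 \<le> r (X \<union> {a,b}) + r (E - X)"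
    by (rule H1ab[OF aE ab ntA' tcA])
  have rab: "r {a,b} = 2" using r2 aE ab by simp
  have GE: "E - {a,b} - (E - {a,b}) = {}" by simp
  have eqs: "\<And>X. X \<subseteq> E - {a,b} \<Longrightarrow> (E - {a,b} - X) \<union> {a,b} = E - X" using aE by auto
  have eqE: "(E - {a,b}) \<union> {a,b} = E" using aE by auto
  have nl: "\<forall>x\<in>gnd N. rk N {x} = 1"
  proof
    fix x assume x: "x \<in> gnd N"
    then have xE: "x \<in> E" "x \<noteq> a" "x \<noteq> b" using NF(1) by auto
    have "r {x, b, a} = 3" by (rule no_tri[OF ntA' xE(1) aE(2) aE(1) xE(3) xE(2) ab[symmetric]])
    moreover have "{x} \<union> {a,b} = {x,b,a}" by auto
    ultimately show "rk N {x} = 1" using NF(2)[of "{x}"] xE by simp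
  qed
  have H1N: "\<forall>X. X \<subseteq> gnd N \<longrightarrow> X \<noteq> {} \<longrightarrow> gnd N - X \<noteq> {} \<longrightarrow> rk N (gnd N) + 1 \<le> rk N X + rk N (gnd N - X)"
  proof (intro allI impI)
    fix X assume X: "X \<subseteq> gnd N" "X \<noteq> {}" "gnd N - X \<noteq> {}"
    have X': "X \<subseteq> E - {a,b}" "E - {a,b} - X \<noteq> {}" using X NF(1) by auto
    have h: "r E + r {a,b} + 1 \<le> r (X \<union> {a,b}) + r (E - X)" using H1 X' X(2) by blast
    have "rk N X + 2 = r (X \<union> {a,b})" using NF(2) X' by simp
    moreover have "rk N (gnd N - X) + 2 = r (E - X)" using NF(2)[of "E - {a,b} - X"] NF(1) eqs[OF X'(1)] by simp
    moreover have "rk N (gnd N) + 2 = r E" using NF(2)[of "E - {a,b}"] NF(1) eqE by simp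
    ultimately show "rk N (gnd N) + 1 \<le> rk N X + rk N (gnd N - X)" using h rab by linarith
  qed
  have H2N: "\<forall>X. X \<subseteq> gnd N \<longrightarrow> 2 \<le> rk N X \<longrightarrow> 2 \<le> rk N (gnd N - X) \<longrightarrow> rk N (gnd N) + 2 \<le> rk N X + rk N (gnd N - X)"
  proof (intro allI impI)
    fix X assume X: "X \<subseteq> gnd N" "2 \<le> rk N X" "2 \<le> rk N (gnd N - X)"
    have X': "X \<subseteq> E - {a,b}" using X NF(1) by auto
    have e1: "rk N X + 2 = r (X \<union> {a,b})" using NF(2) X' by simp
    have e2: "rk N (gnd N - X) + 2 = r (E - X)" using NF(2)[of "E - {a,b} - X"] NF(1) eqs[OF X'] by simp
    have e3: "rk N (gnd N) + 2 = r E" using NF(2)[of "E - {a,b}"] NF(1) eqE by simp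
    show "rk N (gnd N) + 2 \<le> rk N X + rk N (gnd N - X)"
    proof (rule ccontr)
      assume "\<not> rk N (gnd N) + 2 \<le> rk N X + rk N (gnd N - X)"
      then have lam: "lamok {a,b} X" unfolding lamok_def using e1 e2 e3 rab by linarith
      have cX: "2 \<le> card X" using mat_card[OF NF(3), of X] X by simp
      have cY: "2 \<le> card (E - {a,b} - X)" using mat_card[OF NF(3), of "gnd N - X"] X NF(1) by auto
      have s: "sep2 {a,b} X" unfolding sep2_def using X' lam cX cY by simp
      show False
      proof (cases "n = 4")
        case False
        then have "6 \<le> n" using n by presburger
        then show False using J7[OF c ntA n(1) _ n(3) ntB, of X] s unfolding a_b_def by simp
      next
        case True
        have c3X: "3 \<le> card X"
        proof (rule ccontr)
          assume "\<not> 3 \<le> card X"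
          then have "card X = 2" using cX by simp
          then have "r (X \<union> {a,b}) \<le> 3" by (rule sep2ab_card2[OF aE ab s])
          then show False using e1 X by simp
        qed
        have sY: "sep2 {a,b} (E - {a,b} - X)" by (rule sep2_sym[OF K s])
        have c3Y: "3 \<le> card (E - {a,b} - X)"
        proof (rule ccontr)
          assume "\<not> 3 \<le> card (E - {a,b} - X)"
          then have "card (E - {a,b} - X) = 2" using cY by simp
          then have "r ((E - {a,b} - X) \<union> {a,b}) \<le> 3" by (rule sep2ab_card2[OF aE ab sY])
          then show False using e2 X eqs[OF X'] by simp
        qed
        have t5: "5 \<le> t" using True n by simp
        have "\<not> sep2 {fs!c, fs!4} X" by (rule J5[OF c ntA t5]) (use c3X c3Y True in \<open>simp_all add: a_b_def\<close>)
        then show False using s True unfolding a_b_def by simp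
      qed
    qed
  qed
  have "three_connected (si N)" by (rule si_tc[OF NF(3) nl H1N H2N])
  then show ?thesis unfolding N_def a_b_def .
qed

end

theorem lemma6p1:
  fixes M :: "'a matroid" and F :: "'a set" and fs :: "'a list" and i j :: nat
  assumes "matroid M" and "three_connected M"
    and "maximal_flan M F" and "card F \<ge> 5" and "F \<noteq> gnd M"
    and "i \<in> {1, 2, 3}" and "odd j" and "5 \<le> j" and "j \<le> card F"
    and "flan_ordering M F fs"
    and "\<not> in_triangle M (fs ! (i - 1))" and "\<not> in_triangle M (fs ! (j - 1))"
  shows "three_connected (contract M (fs ! (i - 1))) \<and>
         three_connected (contract M (fs ! (j - 1))) \<and>
         three_connected (si (contract (contract M (fs ! (i - 1))) (fs ! (j - 1)))) \<and>
         (j \<ge> 7 \<longrightarrow> three_connected (contract (contract M (fs ! (i - 1))) (fs ! (j - 1)))) \<and>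
         (card F = 5 \<longrightarrow> three_connected (contract (contract M (fs ! (i - 1))) (fs ! (j - 1))))"
proof -
  have FE: "F \<subseteq> gnd M" using assms(10) unfolding flan_ordering_def by auto
  have fin: "finite (gnd M)" using assms(1) mat_fin by blast
  have "F \<subset> gnd M" using FE assms(5) by blast
  then have "card F < card (gnd M)" using fin psubset_card_mono by blast
  then have big: "6 \<le> card (gnd M)" using assms(4) by simp
  interpret fl M F fs
    by (rule fl.intro, rule m3.intro[OF assms(1) assms(2) big], rule fl_axioms.intro[OF assms(10) assms(5) assms(3)])
  define c where "c = i - 1"
  define n where "n = j - 1"
  have c3: "c < 3" unfolding c_def using assms(6) by auto
  have tF: "t = card F" using card_F by simp
  have n: "even n" "4 \<le> n" "n < t" unfolding n_def using assms(7,8,9) tF by auto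
  have ntA: "\<not> in_triangle M (fs!c)" using assms(11) unfolding c_def .
  have ntB: "\<not> in_triangle M (fs!n)" using assms(12) unfolding n_def .
  have C1: "three_connected (contract M (fs!c))" by (rule tc_fi[OF c3 ntA])
  have C2: "three_connected (contract M (fs!n))" by (rule tc_fj[OF n ntB])
  have C3: "three_connected (si (contract (contract M (fs!c)) (fs!n)))" by (rule N_si[OF c3 ntA n ntB])
  have C4: "j \<ge> 7 \<longrightarrow> three_connected (contract (contract M (fs!c)) (fs!n))"
  proof
    assume "j \<ge> 7"
    then have "6 \<le> n" unfolding n_def by simp
    then show "three_connected (contract (contract M (fs!c)) (fs!n))" by (rule N_tc7[OF c3 ntA n(1) _ n(3) ntB])
  qed
  have C5: "card F = 5 \<longrightarrow> three_connected (contract (contract M (fs!c)) (fs!n))"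
  proof
    assume h: "card F = 5"
    then have t5: "t = 5" using tF by simp
    have n4: "n = 4" unfolding n_def using assms(8,9) h by simp
    have ntB4: "\<not> in_triangle M (fs!4)" using ntB n4 by simp
    show "three_connected (contract (contract M (fs!c)) (fs!n))"
      using N_tc5[OF c3 ntA t5 ntB4] n4 by simp
  qed
  show ?thesis using C1 C2 C3 C4 C5 unfolding c_def n_def by blast
qed

end
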